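(* (Soundness) Let $\mathfrak M=(\mathfrak T,\mathcal V)$ be a TFL model and $\phi$ a TFL formula in positive normal form, and let $H_0=(\mathfrak X(s_0),t_\epsilon)$ be the initial process. If $H_0\notin[\![\phi]\!]^{\mathfrak T}_{\mathcal V}$, then Adam has a winning strategy in the model-checking game $\mathcal G(H_0,\phi)$.
   Context: Systems: $\mathfrak T=(S,s_0,T,I,\Sigma)$, a transition system with independence (states $S$, initial $s_0$, labels $\Sigma$, transitions $T\subseteq S\times\Sigma\times S$, irreflexive symmetric independence $I\subseteq T\times T$ satisfying the standard TSI axioms), image-finite. For $t=(s,a,s')$: $\sigma(t)=s,\tau(t)=s',\delta(t)=a$. $t\otimes t'$ iff $\sigma(t)=\sigma(t')\wedge tIt'$; $t\ominus t'$ iff $\tau(t)=\sigma(t')\wedge tIt'$; $t\le t'$ iff $\tau(t)=\sigma(t')\wedge\neg tIt'$. $\mathfrak X(s)$ = transitions with source $s$; conflict-free set = set with common source, pairwise $\otimes$; support sets = the $\mathfrak X(s)$ and non-empty conflict-free sets; $M\sqsubseteq R$ iff $M\subseteq R$ and no $t\in R\setminus M$ has $t\otimes t'$ for all $t'\in M$; $\mathcal X$ = all $\mathfrak X(s)$ and all support sets $M\sqsubseteq\mathfrak X(s)$; $\mathfrak A=T\cup\{t_\epsilon\}$ with fresh $t_\epsilon$, $\tau(t_\epsilon)=s_0$, $t_\epsilon\le t$ whenever $\sigma(t)=s_0$, never $t_\epsilon\ominus t$; processes $\mathfrak S=\mathcal X\times\mathfrak A$. TFL: formulas $\phi::=Z\mid\neg\phi\mid\phi\wedge\phi\mid\langle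 a\rangle_c\phi\mid\langle a\rangle_{nc}\phi\mid\langle\otimes\rangle\phi\mid\mu Z.\phi$ (free occurrences of $Z$ in $\mu Z.\phi$ under an even number of negations), with duals $\vee$, $[a]_c=\neg\langle a\rangle_c\neg$, $[a]_{nc}$, $[\otimes]=\neg\langle\otimes\rangle\neg$, $\nu Z.\phi=\neg\mu Z.\neg\phi[\neg Z/Z]$. A model is $(\mathfrak T,\mathcal V)$ with $\mathcal V:\mathrm{Var}\to2^{\mathfrak S}$. Semantics in $2^{\mathfrak S}$: $[\![Z]\!]=\mathcal V(Z)$, $\neg$ complement, $\wedge$ intersection, $[\![\langle a\rangle_c\phi]\!]=\{(R,t):\exists r\in R.\ \delta(r)=a,\ t\le r,\ (\mathfrak X(\tau(r)),r)\in[\![\phi]\!]\}$, $\langle a\rangle_{nc}$ likewise with $t\ominus r$, $[\![\langle\otimes\rangle\phi]\!]=\{(R,t):\exists M\in\mathcal X.\ M\sqsubseteq R,\ (M,t)\in[\![\phi]\!]\}$, $[\![\mu Z.\phi]\!]_{\mathcal V}=\bigcap\{Q\subseteq\mathfrak S:[\![\phi]\!]_{\mathcal V[Z:=Q]}\subseteq Q\}$. Positive normal form: negation only on variables, no two binders bind the same variable. $Sub(\phi)$ is the set of subformulas. Model-checking game $\mathcal G(H_0,\phi)$ between Eve and Adam: configurations $H\vdash\psi$ with $H\in\mathfrak S$, $\psi\in Sub(\phi)$; start $H_0\vdash\phi$. Rules: $H\vdash\mu Z.\psi$ or $H\vdash\nu Z.\psi$ moves to $H\vdash Z$; $H\vdash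 Z$ with $Z$ bound by $\mu Z.\psi$ or $\nu Z.\psi$ moves to $H\vdash\psi$; at $H\vdash\psi_0\vee\psi_1$ Eve (at $\wedge$, Adam) chooses $H\vdash\psi_i$; at $(R,t)\vdash\langle a\rangle_c\psi$ Eve (at $[a]_c\psi$, Adam) chooses $r\in R$ with $\delta(r)=a$, $t\le r$, moving to $(\mathfrak X(\tau(r)),r)\vdash\psi$; same for $\langle a\rangle_{nc}$/$[a]_{nc}$ with $t\ominus r$; at $(R,t)\vdash\langle\otimes\rangle\psi$ Eve (at $[\otimes]\psi$, Adam) chooses $M\in\mathcal X$ with $M\sqsubseteq R$, moving to $(M,t)\vdash\psi$. Adam wins a play iff it ends at $H\vdash Z$ ($Z$ free) with $H\notin\mathcal V(Z)$, or at a diamond configuration ($\langle a\rangle_c$, $\langle a\rangle_{nc}$, $\langle\otimes\rangle$) with no available choice, or is infinite and the syntactically outermost variable occurring infinitely often is bound by a $\mu$; Eve wins dually (ends at $H\vdash Z$ with $H\in\mathcal V(Z)$, at a box configuration with no available choice, or infinite with the outermost infinitely-often variable bound by a $\nu$). A player has a winning strategy if she/he can guarantee winning every play. *)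

theory Defs
  imports Main
begin

type_synonym ('s,'a) tr = "'s \<times> 'a \<times> 's"

record ('s,'a) tsi =
  St   :: "'s set"
  init :: "'s"
  Tr   :: "('s,'a) tr set"
  Ind  :: "(('s,'a) tr \<times> ('s,'a) tr) set"
  Lab  :: "'a set"

definition src :: "('s,'a) tr \<Rightarrow> 's" where "src t = fst t"
definition tgt :: "('s,'a) tr \<Rightarrow> 's" where "tgt t = snd (snd t)"
definition lbl :: "('s,'a) tr \<Rightarrow> 'a" where "lbl t = fst (snd t)"

definition diam_step :: "('s,'a,'x) tsi_scheme \<Rightarrow> ('s,'a) tr \<Rightarrow> ('s,'a) tr \<Rightarrow> bool" where
  "diam_step TS e e' \<longleftrightarrow> (\<exists>s a s1 s2 u b. e = (s,a,s1) \<and> e' = (s2,a,u) \<and>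
      ((s,a,s1),(s,b,s2)) \<in> Ind TS \<and> ((s,a,s1),(s1,b,u)) \<in> Ind TS \<and> ((s,b,s2),(s2,a,u)) \<in> Ind TS)"

definition diam_equiv :: "('s,'a,'x) tsi_scheme \<Rightarrow> ('s,'a) tr \<Rightarrow> ('s,'a) tr \<Rightarrow> bool" where
  "diam_equiv TS = (\<lambda>e e'. (e, e') \<in> ({(x,y). diam_step TS x y} \<union> {(x,y). diam_step TS y x})\<^sup>*)"

definition is_tsi :: "('s,'a,'x) tsi_scheme \<Rightarrow> bool" where
  "is_tsi TS \<longleftrightarrow>
     init TS \<in> St TS \<and>
     Tr TS \<subseteq> St TS \<times> Lab TS \<times> St TS \<and>
     Ind TS \<subseteq> Tr TS \<times> Tr TS \<and>
     irrefl (Ind TS) \<and> sym (Ind TS) \<and>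
     (\<forall>s a s1 s2. diam_equiv TS (s,a,s1) (s,a,s2) \<longrightarrow> s1 = s2) \<and>
     (\<forall>s a s1 b s2. ((s,a,s1),(s,b,s2)) \<in> Ind TS \<longrightarrow>
        (\<exists>u. ((s,a,s1),(s1,b,u)) \<in> Ind TS \<and> ((s,b,s2),(s2,a,u)) \<in> Ind TS)) \<and>
     (\<forall>s a s1 b u. ((s,a,s1),(s1,b,u)) \<in> Ind TS \<longrightarrow>
        (\<exists>s2. ((s,a,s1),(s,b,s2)) \<in> Ind TS \<and> ((s,b,s2),(s2,a,u)) \<in> Ind TS)) \<and>
     (\<forall>e e' w. diam_equiv TS e e' \<and> (e', w) \<in> Ind TS \<longrightarrow> (e, w) \<in> Ind TS)"

definition outs :: "('s,'a,'x) tsi_scheme \<Rightarrow> 's \<Rightarrow> ('s,'a) tr set" where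
  "outs TS s = {t \<in> Tr TS. src t = s}"

definition image_finite :: "('s,'a,'x) tsi_scheme \<Rightarrow> bool" where
  "image_finite TS \<longleftrightarrow> (\<forall>s \<in> St TS. finite (outs TS s))"

section \<open>Relations on transitions; \<open>None\<close> plays the role of \<open>t_\<epsilon>\<close>\<close>

definition otimes :: "('s,'a,'x) tsi_scheme \<Rightarrow> ('s,'a) tr \<Rightarrow> ('s,'a) tr \<Rightarrow> bool" where
  "otimes TS t t' \<longleftrightarrow> src t = src t' \<and> (t, t') \<in> Ind TS"

definition tgt_opt :: "('s,'a,'x) tsi_scheme \<Rightarrow> ('s,'a) tr option \<Rightarrow> 's" where
  "tgt_opt TS t = (case t of None \<Rightarrow> init TS | Some t' \<Rightarrow> tgt t')"

definition cle :: "('s,'a,'x) tsi_scheme \<Rightarrow> ('s,'a) tr option \<Rightarrow> ('s,'a) tr \<Rightarrow> bool" where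
  "cle TS t r = (case t of None \<Rightarrow> src r = init TS
                         | Some t' \<Rightarrow> tgt t' = src r \<and> (t', r) \<notin> Ind TS)"

definition ominus :: "('s,'a,'x) tsi_scheme \<Rightarrow> ('s,'a) tr option \<Rightarrow> ('s,'a) tr \<Rightarrow> bool" where
  "ominus TS t r = (case t of None \<Rightarrow> False
                            | Some t' \<Rightarrow> tgt t' = src r \<and> (t', r) \<in> Ind TS)"

definition conflict_free :: "('s,'a,'x) tsi_scheme \<Rightarrow> ('s,'a) tr set \<Rightarrow> bool" where
  "conflict_free TS M \<longleftrightarrow> M \<subseteq> Tr TS \<and> (\<exists>s. \<forall>t\<in>M. src t = s) \<and>
      (\<forall>t\<in>M. \<forall>t'\<in>M. t \<noteq> t' \<longrightarrow> otimes TS t t')"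

definition support_set :: "('s,'a,'x) tsi_scheme \<Rightarrow> ('s,'a) tr set \<Rightarrow> bool" where
  "support_set TS M \<longleftrightarrow> (\<exists>s\<in>St TS. M = outs TS s) \<or> (M \<noteq> {} \<and> conflict_free TS M)"

definition sqsub :: "('s,'a,'x) tsi_scheme \<Rightarrow> ('s,'a) tr set \<Rightarrow> ('s,'a) tr set \<Rightarrow> bool" where
  "sqsub TS M R \<longleftrightarrow> M \<subseteq> R \<and> \<not> (\<exists>t \<in> R - M. \<forall>t'\<in>M. otimes TS t t')"

definition XX :: "('s,'a,'x) tsi_scheme \<Rightarrow> ('s,'a) tr set set" where
  "XX TS = {outs TS s | s. s \<in> St TS} \<union>
           {M. support_set TS M \<and> (\<exists>s\<in>St TS. sqsub TS M (outs TS s))}"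

definition AA :: "('s,'a,'x) tsi_scheme \<Rightarrow> ('s,'a) tr option set" where
  "AA TS = Some ` Tr TS \<union> {None}"

type_synonym ('s,'a) proc = "('s,'a) tr set \<times> ('s,'a) tr option"

definition procs :: "('s,'a,'x) tsi_scheme \<Rightarrow> ('s,'a) proc set" where
  "procs TS = XX TS \<times> AA TS"

definition init_proc :: "('s,'a,'x) tsi_scheme \<Rightarrow> ('s,'a) proc" where
  "init_proc TS = (outs TS (init TS), None)"

datatype ('a,'v) tfl =
    FVar 'v
  | FNeg "('a,'v) tfl"
  | FConj "('a,'v) tfl" "('a,'v) tfl"
  | FDisj "('a,'v) tfl" "('a,'v) tfl"
  | DiaC 'a "('a,'v) tfl"
  | BoxC 'a "('a,'v) tfl"
  | DiaNC 'a "('a,'v) tfl"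
  | BoxNC 'a "('a,'v) tfl"
  | DiaOt "('a,'v) tfl"
  | BoxOt "('a,'v) tfl"
  | Mu 'v "('a,'v) tfl"
  | Nu 'v "('a,'v) tfl"

text \<open>Dual connectives are given the semantics of their defining abbreviations
  (\<open>\<nu>Z.\<phi> = \<not>\<mu>Z.\<not>\<phi>[\<not>Z/Z]\<close>, with \<open>[\<not>Z/Z]\<close> realised semantically by complementing
  the valuation of \<open>Z\<close>).\<close>
fun sem :: "('s,'a,'x) tsi_scheme \<Rightarrow> ('v \<Rightarrow> ('s,'a) proc set) \<Rightarrow> ('a,'v) tfl \<Rightarrow> ('s,'a) proc set" where
  "sem TS V (FVar Z) = V Z"
| "sem TS V (FNeg \<phi>) = procs TS - sem TS V \<phi>"
| "sem TS V (FConj \<phi> \<psi>) = sem TS V \<phi> \<inter> sem TS V \<psi>"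
| "sem TS V (FDisj \<phi> \<psi>) = procs TS - ((procs TS - sem TS V \<phi>) \<inter> (procs TS - sem TS V \<psi>))"
| "sem TS V (DiaC a \<phi>) = {(R,t) \<in> procs TS. \<exists>r\<in>R. lbl r = a \<and> cle TS t r \<and>
        (outs TS (tgt r), Some r) \<in> sem TS V \<phi>}"
| "sem TS V (BoxC a \<phi>) = procs TS - {(R,t) \<in> procs TS. \<exists>r\<in>R. lbl r = a \<and> cle TS t r \<and>
        (outs TS (tgt r), Some r) \<in> procs TS - sem TS V \<phi>}"
| "sem TS V (DiaNC a \<phi>) = {(R,t) \<in> procs TS. \<exists>r\<in>R. lbl r = a \<and> ominus TS t r \<and>
        (outs TS (tgt r), Some r) \<in> sem TS V \<phi>}"
| "sem TS V (BoxNC a \<phi>) = procs TS - {(R,t) \<in> procs TS. \<exists>r\<in>R. lbl r = a \<and> ominus TS t r \<and>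
        (outs TS (tgt r), Some r) \<in> procs TS - sem TS V \<phi>}"
| "sem TS V (DiaOt \<phi>) = {(R,t) \<in> procs TS. \<exists>M\<in>XX TS. sqsub TS M R \<and> (M,t) \<in> sem TS V \<phi>}"
| "sem TS V (BoxOt \<phi>) = procs TS - {(R,t) \<in> procs TS. \<exists>M\<in>XX TS. sqsub TS M R \<and>
        (M,t) \<in> procs TS - sem TS V \<phi>}"
| "sem TS V (Mu Z \<phi>) = \<Inter>{Q. Q \<subseteq> procs TS \<and> sem TS (V(Z := Q)) \<phi> \<subseteq> Q}"
| "sem TS V (Nu Z \<phi>) = procs TS -
        \<Inter>{Q. Q \<subseteq> procs TS \<and> procs TS - sem TS (V(Z := procs TS - Q)) \<phi> \<subseteq> Q}"

fun sub :: "('a,'v) tfl \<Rightarrow> ('a,'v) tfl set" where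
  "sub (FVar Z) = {FVar Z}"
| "sub (FNeg \<phi>) = insert (FNeg \<phi>) (sub \<phi>)"
| "sub (FConj \<phi> \<psi>) = insert (FConj \<phi> \<psi>) (sub \<phi> \<union> sub \<psi>)"
| "sub (FDisj \<phi> \<psi>) = insert (FDisj \<phi> \<psi>) (sub \<phi> \<union> sub \<psi>)"
| "sub (DiaC a \<phi>) = insert (DiaC a \<phi>) (sub \<phi>)"
| "sub (BoxC a \<phi>) = insert (BoxC a \<phi>) (sub \<phi>)"
| "sub (DiaNC a \<phi>) = insert (DiaNC a \<phi>) (sub \<phi>)"
| "sub (BoxNC a \<phi>) = insert (BoxNC a \<phi>) (sub \<phi>)"
| "sub (DiaOt \<phi>) = insert (DiaOt \<phi>) (sub \<phi>)"
| "sub (BoxOt \<phi>) = insert (BoxOt \<phi>) (sub \<phi>)"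
| "sub (Mu Z \<phi>) = insert (Mu Z \<phi>) (sub \<phi>)"
| "sub (Nu Z \<phi>) = insert (Nu Z \<phi>) (sub \<phi>)"

text \<open>Bound variables, listed with multiplicity (one entry per binder).\<close>
fun bvars :: "('a,'v) tfl \<Rightarrow> 'v list" where
  "bvars (FVar Z) = []"
| "bvars (FNeg \<phi>) = bvars \<phi>"
| "bvars (FConj \<phi> \<psi>) = bvars \<phi> @ bvars \<psi>"
| "bvars (FDisj \<phi> \<psi>) = bvars \<phi> @ bvars \<psi>"
| "bvars (DiaC a \<phi>) = bvars \<phi>"
| "bvars (BoxC a \<phi>) = bvars \<phi>"
| "bvars (DiaNC a \<phi>) = bvars \<phi>"
| "bvars (BoxNC a \<phi>) = bvars \<phi>"
| "bvars (DiaOt \<phi>) = bvars \<phi>"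
| "bvars (BoxOt \<phi>) = bvars \<phi>"
| "bvars (Mu Z \<phi>) = Z # bvars \<phi>"
| "bvars (Nu Z \<phi>) = Z # bvars \<phi>"

fun fvars :: "('a,'v) tfl \<Rightarrow> 'v set" where
  "fvars (FVar Z) = {Z}"
| "fvars (FNeg \<phi>) = fvars \<phi>"
| "fvars (FConj \<phi> \<psi>) = fvars \<phi> \<union> fvars \<psi>"
| "fvars (FDisj \<phi> \<psi>) = fvars \<phi> \<union> fvars \<psi>"
| "fvars (DiaC a \<phi>) = fvars \<phi>"
| "fvars (BoxC a \<phi>) = fvars \<phi>"
| "fvars (DiaNC a \<phi>) = fvars \<phi>"
| "fvars (BoxNC a \<phi>) = fvars \<phi>"
| "fvars (DiaOt \<phi>) = fvars \<phi>"
| "fvars (BoxOt \<phi>) = fvars \<phi>"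
| "fvars (Mu Z \<phi>) = fvars \<phi> - {Z}"
| "fvars (Nu Z \<phi>) = fvars \<phi> - {Z}"

definition pnf :: "('a,'v) tfl \<Rightarrow> bool" where
  "pnf \<phi> \<longleftrightarrow>
     (\<forall>\<psi>. FNeg \<psi> \<in> sub \<phi> \<longrightarrow> (\<exists>Z. \<psi> = FVar Z)) \<and>
     distinct (bvars \<phi>) \<and>
     fvars \<phi> \<inter> set (bvars \<phi>) = {} \<and>
     (\<forall>Z \<psi>. (Mu Z \<psi> \<in> sub \<phi> \<or> Nu Z \<psi> \<in> sub \<phi>) \<longrightarrow> FNeg (FVar Z) \<notin> sub \<psi>)"

type_synonym ('s,'a,'v) pos = "('s,'a) proc \<times> ('a,'v) tfl"

fun moves :: "('s,'a,'x) tsi_scheme \<Rightarrow> ('a,'v) tfl \<Rightarrow> ('s,'a,'v) pos \<Rightarrow> ('s,'a,'v) pos set" where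
  "moves TS \<phi> (H, FVar Z) = {(H, \<beta>) | \<beta>. Mu Z \<beta> \<in> sub \<phi> \<or> Nu Z \<beta> \<in> sub \<phi>}"
| "moves TS \<phi> (H, FNeg \<psi>) = {}"
| "moves TS \<phi> (H, FConj \<psi>1 \<psi>2) = {(H, \<psi>1), (H, \<psi>2)}"
| "moves TS \<phi> (H, FDisj \<psi>1 \<psi>2) = {(H, \<psi>1), (H, \<psi>2)}"
| "moves TS \<phi> ((R,t), DiaC a \<psi>) =
     {((outs TS (tgt r), Some r), \<psi>) | r. r \<in> R \<and> lbl r = a \<and> cle TS t r}"
| "moves TS \<phi> ((R,t), BoxC a \<psi>) =
     {((outs TS (tgt r), Some r), \<psi>) | r. r \<in> R \<and> lbl r = a \<and> cle TS t r}"
| "moves TS \<phi> ((R,t), DiaNC a \<psi>) =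
     {((outs TS (tgt r), Some r), \<psi>) | r. r \<in> R \<and> lbl r = a \<and> ominus TS t r}"
| "moves TS \<phi> ((R,t), BoxNC a \<psi>) =
     {((outs TS (tgt r), Some r), \<psi>) | r. r \<in> R \<and> lbl r = a \<and> ominus TS t r}"
| "moves TS \<phi> ((R,t), DiaOt \<psi>) = {((M, t), \<psi>) | M. M \<in> XX TS \<and> sqsub TS M R}"
| "moves TS \<phi> ((R,t), BoxOt \<psi>) = {((M, t), \<psi>) | M. M \<in> XX TS \<and> sqsub TS M R}"
| "moves TS \<phi> (H, Mu Z \<psi>) = {(H, FVar Z)}"
| "moves TS \<phi> (H, Nu Z \<psi>) = {(H, FVar Z)}"

fun adam_pos :: "('s,'a,'v) pos \<Rightarrow> bool" where
  "adam_pos (H, FConj _ _) = True"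
| "adam_pos (H, BoxC _ _) = True"
| "adam_pos (H, BoxNC _ _) = True"
| "adam_pos (H, BoxOt _) = True"
| "adam_pos _ = False"

fun adam_wins_end :: "('v \<Rightarrow> ('s,'a) proc set) \<Rightarrow> ('s,'a,'v) pos \<Rightarrow> bool" where
  "adam_wins_end V (H, FVar Z) = (H \<notin> V Z)"
| "adam_wins_end V (H, FNeg (FVar Z)) = (H \<in> V Z)"
| "adam_wins_end V (H, DiaC _ _) = True"
| "adam_wins_end V (H, DiaNC _ _) = True"
| "adam_wins_end V (H, DiaOt _) = True"
| "adam_wins_end V _ = False"

text \<open>Adam wins an infinite play iff the syntactically outermost variable occurring
  infinitely often (the one whose binder contains the binders of all the others)
  is bound by a \<open>\<mu>\<close>.\<close>
definition inf_vars :: "(nat \<Rightarrow> ('s,'a,'v) pos) \<Rightarrow> 'v set" where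
  "inf_vars p = {Z. infinite {i. snd (p i) = FVar Z}}"

definition adam_wins_inf :: "('a,'v) tfl \<Rightarrow> (nat \<Rightarrow> ('s,'a,'v) pos) \<Rightarrow> bool" where
  "adam_wins_inf \<phi> p \<longleftrightarrow>
     (\<exists>Z \<psi>. Z \<in> inf_vars p \<and> Mu Z \<psi> \<in> sub \<phi> \<and>
        (\<forall>Z' \<in> inf_vars p. \<exists>\<psi>'. Mu Z' \<psi>' \<in> sub (Mu Z \<psi>) \<or> Nu Z' \<psi>' \<in> sub (Mu Z \<psi>)))"

definition adam_strategy ::
  "('s,'a,'x) tsi_scheme \<Rightarrow> ('a,'v) tfl \<Rightarrow> (('s,'a,'v) pos list \<Rightarrow> ('s,'a,'v) pos) \<Rightarrow> bool" where
  "adam_strategy TS \<phi> \<sigma> \<longleftrightarrow>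
     (\<forall>h. h \<noteq> [] \<and> adam_pos (last h) \<and> moves TS \<phi> (last h) \<noteq> {} \<longrightarrow>
          \<sigma> h \<in> moves TS \<phi> (last h))"

definition finite_play ::
  "('s,'a,'x) tsi_scheme \<Rightarrow> ('s,'a) proc \<Rightarrow> ('a,'v) tfl \<Rightarrow>
   (('s,'a,'v) pos list \<Rightarrow> ('s,'a,'v) pos) \<Rightarrow> ('s,'a,'v) pos list \<Rightarrow> bool" where
  "finite_play TS H0 \<phi> \<sigma> ps \<longleftrightarrow>
     ps \<noteq> [] \<and> hd ps = (H0, \<phi>) \<and>
     (\<forall>i. Suc i < length ps \<longrightarrow>
        ps ! Suc i \<in> moves TS \<phi> (ps ! i) \<and>
        (adam_pos (ps ! i) \<longrightarrow> ps ! Suc i = \<sigma> (take (Suc i) ps))) \<and>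
     moves TS \<phi> (last ps) = {}"

definition infinite_play ::
  "('s,'a,'x) tsi_scheme \<Rightarrow> ('s,'a) proc \<Rightarrow> ('a,'v) tfl \<Rightarrow>
   (('s,'a,'v) pos list \<Rightarrow> ('s,'a,'v) pos) \<Rightarrow> (nat \<Rightarrow> ('s,'a,'v) pos) \<Rightarrow> bool" where
  "infinite_play TS H0 \<phi> \<sigma> p \<longleftrightarrow>
     p 0 = (H0, \<phi>) \<and>
     (\<forall>i. p (Suc i) \<in> moves TS \<phi> (p i) \<and>
        (adam_pos (p i) \<longrightarrow> p (Suc i) = \<sigma> (map p [0..<Suc i])))"

definition adam_has_winning_strategy ::
  "('s,'a,'x) tsi_scheme \<Rightarrow> ('v \<Rightarrow> ('s,'a) proc set) \<Rightarrow> ('s,'a) proc \<Rightarrow> ('a,'v) tfl \<Rightarrow> bool" where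
  "adam_has_winning_strategy TS V H0 \<phi> \<longleftrightarrow>
     (\<exists>\<sigma>. adam_strategy TS \<phi> \<sigma> \<and>
        (\<forall>ps. finite_play TS H0 \<phi> \<sigma> ps \<longrightarrow> adam_wins_end V (last ps)) \<and>
        (\<forall>p. infinite_play TS H0 \<phi> \<sigma> p \<longrightarrow> adam_wins_inf \<phi> p))"

end

theory Submission
  imports Defs
begin


lemma sub_refl[simp]: "\<psi> \<in> sub \<psi>" by (cases \<psi>) auto

lemma sub_trans: "\<chi> \<in> sub \<psi> \<Longrightarrow> \<psi> \<in> sub \<phi> \<Longrightarrow> \<chi> \<in> sub \<phi>"
  by (induction \<phi>) auto

lemma bvars_sub: "\<psi> \<in> sub \<phi> \<Longrightarrow> set (bvars \<psi>) \<subseteq> set (bvars \<phi>)"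
  by (induction \<phi>) auto

lemma distinct_sub: "\<psi> \<in> sub \<phi> \<Longrightarrow> distinct (bvars \<phi>) \<Longrightarrow> distinct (bvars \<psi>)"
  by (induction \<phi>) auto

lemma binder_bvars: "Mu Y \<beta> \<in> sub \<chi> \<or> Nu Y \<beta> \<in> sub \<chi> \<Longrightarrow> Y \<in> set (bvars \<chi>)"
  using bvars_sub by fastforce

lemma bvars_binder: "Y \<in> set (bvars \<chi>) \<Longrightarrow> \<exists>\<beta>. Mu Y \<beta> \<in> sub \<chi> \<or> Nu Y \<beta> \<in> sub \<chi>"
  by (induction \<chi>) auto

lemma binder_unique: "distinct (bvars \<chi>) \<Longrightarrow> Mu Z \<beta> \<in> sub \<chi> \<or> Nu Z \<beta> \<in> sub \<chi> \<Longrightarrow>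
   Mu Z \<beta>' \<in> sub \<chi> \<or> Nu Z \<beta>' \<in> sub \<chi> \<Longrightarrow> \<beta> = \<beta>'"
proof (induction \<chi>)
  case (FConj a b) then show ?case using binder_bvars[of Z _ a] binder_bvars[of Z _ b] by auto
next
  case (FDisj a b) then show ?case using binder_bvars[of Z _ a] binder_bvars[of Z _ b] by auto
next
  case (Mu Y c) then show ?case using binder_bvars[of Z _ c] by auto
next
  case (Nu Y c) then show ?case using binder_bvars[of Z _ c] by auto
qed auto

lemma fvar_origin: "\<chi>' \<in> sub \<chi> \<Longrightarrow> Y \<in> fvars \<chi>' \<Longrightarrow>
   Y \<in> fvars \<chi> \<or> (\<exists>\<beta>. (Mu Y \<beta> \<in> sub \<chi> \<or> Nu Y \<beta> \<in> sub \<chi>) \<and> \<chi>' \<in> sub \<beta>)"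
proof (induction \<chi>)
  case (Mu X c) then show ?case by (cases "Y = X") auto
next
  case (Nu X c) then show ?case by (cases "Y = X") auto
qed auto



lemma sem_procs: "(\<forall>Y. V Y \<subseteq> procs TS) \<Longrightarrow> sem TS V \<chi> \<subseteq> procs TS"
proof (induction \<chi> arbitrary: V)
  case (Mu Z c)
  have "sem TS (V(Z := procs TS)) c \<subseteq> procs TS" by (rule Mu.IH) (use Mu.prems in auto)
  then have "procs TS \<in> {Q. Q \<subseteq> procs TS \<and> sem TS (V(Z := Q)) c \<subseteq> Q}" by simp
  from Inter_lower[OF this] show ?case by simp
qed auto

lemma sem_mono: "(\<forall>Y. V1 Y \<subseteq> V2 Y) \<Longrightarrow> (\<forall>\<chi>. FNeg \<chi> \<in> sub \<psi> \<longrightarrow> (\<exists>Y. \<chi> = FVar Y \<and> V1 Y = V2 Y))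
   \<Longrightarrow> sem TS V1 \<psi> \<subseteq> sem TS V2 \<psi>"
proof (induction \<psi> arbitrary: V1 V2)
  case (FNeg c)
  then obtain Y where "c = FVar Y" "V1 Y = V2 Y" by auto
  then show ?case by auto
next
  case (FConj a b)
  have "sem TS V1 a \<subseteq> sem TS V2 a" by (rule FConj.IH) (use FConj.prems in auto)
  moreover have "sem TS V1 b \<subseteq> sem TS V2 b" by (rule FConj.IH) (use FConj.prems in auto)
  ultimately show ?case by auto
next
  case (FDisj a b)
  have "sem TS V1 a \<subseteq> sem TS V2 a" by (rule FDisj.IH) (use FDisj.prems in auto)
  moreover have "sem TS V1 b \<subseteq> sem TS V2 b" by (rule FDisj.IH) (use FDisj.prems in auto)
  ultimately show ?case by auto
next
  case (DiaC x1 c) 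
  have "sem TS V1 c \<subseteq> sem TS V2 c" by (rule DiaC.IH) (use DiaC.prems in auto)
  then show ?case by (simp only: sem.simps) blast
next
  case (BoxC x1 c)
  have "sem TS V1 c \<subseteq> sem TS V2 c" by (rule BoxC.IH) (use BoxC.prems in auto)
  then show ?case by (simp only: sem.simps) blast
next
  case (DiaNC x1 c)
  have "sem TS V1 c \<subseteq> sem TS V2 c" by (rule DiaNC.IH) (use DiaNC.prems in auto)
  then show ?case by (simp only: sem.simps) blast
next
  case (BoxNC x1 c)
  have "sem TS V1 c \<subseteq> sem TS V2 c" by (rule BoxNC.IH) (use BoxNC.prems in auto)
  then show ?case by (simp only: sem.simps) blast
next
  case (DiaOt c)
  have "sem TS V1 c \<subseteq> sem TS V2 c" by (rule DiaOt.IH) (use DiaOt.prems in auto)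
  then show ?case by (simp only: sem.simps) blast
next
  case (BoxOt c)
  have "sem TS V1 c \<subseteq> sem TS V2 c" by (rule BoxOt.IH) (use BoxOt.prems in auto)
  then show ?case by (simp only: sem.simps) blast
next
  case (Mu Z c)
  have "\<And>Q. sem TS (V1(Z:=Q)) c \<subseteq> sem TS (V2(Z:=Q)) c"
    by (rule Mu.IH) (use Mu.prems in auto)
  then have "{Q. Q \<subseteq> procs TS \<and> sem TS (V2(Z := Q)) c \<subseteq> Q}
     \<subseteq> {Q. Q \<subseteq> procs TS \<and> sem TS (V1(Z := Q)) c \<subseteq> Q}" by blast
  then show ?case by (simp only: sem.simps) blast
next
  case (Nu Z c)
  have "\<And>Q. sem TS (V1(Z:=Q)) c \<subseteq> sem TS (V2(Z:=Q)) c"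
    by (rule Nu.IH) (use Nu.prems in auto)
  then have "{Q. Q \<subseteq> procs TS \<and> procs TS - sem TS (V1(Z := procs TS - Q)) c \<subseteq> Q}
     \<subseteq> {Q. Q \<subseteq> procs TS \<and> procs TS - sem TS (V2(Z := procs TS - Q)) c \<subseteq> Q}" by blast
  then show ?case by (simp only: sem.simps) blast
qed auto



lemma finite_shift_iff: "finite {i::nat. P (i + k)} \<longleftrightarrow> finite {i. P i}"
proof
  assume f: "finite {i. P (i + k)}"
  have "{i. P i} \<subseteq> {..<k} \<union> (\<lambda>i. i + k) ` {i. P (i + k)}"
  proof
    fix i assume "i \<in> {i. P i}"
    then show "i \<in> {..<k} \<union> (\<lambda>i. i + k) ` {i. P (i + k)}"
      by (cases "i < k") (auto intro!: image_eqI[where x="i - k"])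
  qed
  then show "finite {i. P i}" using f by (meson finite_Un finite_imageI finite_lessThan finite_subset)
next
  assume f: "finite {i. P i}"
  have "(\<lambda>i. i + k) ` {i. P (i + k)} \<subseteq> {i. P i}" by auto
  then have "finite ((\<lambda>i. i + k) ` {i. P (i + k)})" using f finite_subset by blast
  then show "finite {i. P (i + k)}" by (rule finite_imageD) (auto simp: inj_on_def)
qed

lemma inf_vars_shift: "inf_vars (\<lambda>i. p (i + k)) = inf_vars p"
  unfolding inf_vars_def using finite_shift_iff[of "\<lambda>i. snd (p i) = FVar _" k] by auto

lemma adam_wins_inf_shift: "adam_wins_inf \<phi> (\<lambda>i. p (i + k)) = adam_wins_inf \<phi> p"
  by (simp add: adam_wins_inf_def inf_vars_shift)

lemma drop_map_upt: "k \<le> m \<Longrightarrow> drop k (map p [0..<m]) = map (\<lambda>i. p (i + k)) [0..<m - k]"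
  by (rule nth_equalityI) (auto simp: add.commute)

locale game =
  fixes TS :: "('s,'a,'x) tsi_scheme" and V :: "'v \<Rightarrow> ('s,'a) proc set" and \<phi> :: "('a,'v) tfl"
  assumes tsi: "is_tsi TS" and Vp: "\<forall>Z. V Z \<subseteq> procs TS" and pnf: "pnf \<phi>"
begin

definition fplay :: "(('s,'a,'v) pos list \<Rightarrow> ('s,'a,'v) pos) \<Rightarrow> ('s,'a,'v) pos \<Rightarrow> (nat \<Rightarrow> ('s,'a,'v) pos) \<Rightarrow> nat \<Rightarrow> bool" where
 "fplay \<sigma> P p n \<longleftrightarrow> p 0 = P \<and> (\<forall>i<n. p (Suc i) \<in> moves TS \<phi> (p i) \<and>
    (adam_pos (p i) \<and> \<sigma> (map p [0..<Suc i]) \<in> moves TS \<phi> (p i) \<longrightarrow> p (Suc i) = \<sigma> (map p [0..<Suc i])))"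

definition Inside :: "('a,'v) tfl \<Rightarrow> ('s,'a,'v) pos \<Rightarrow> bool" where
 "Inside \<psi> Q \<longleftrightarrow> (case snd Q of FVar Y \<Rightarrow> Y \<in> set (bvars \<psi>) | \<chi> \<Rightarrow> \<chi> \<in> sub \<psi>)"

definition wins where
 "wins X \<psi> P \<sigma> \<longleftrightarrow>
   (\<forall>p n. fplay \<sigma> P p n \<longrightarrow> (\<exists>i\<le>n. p i \<in> X) \<or> (\<forall>i\<le>n. Inside \<psi> (p i))) \<and>
   (\<forall>p n. fplay \<sigma> P p n \<and> moves TS \<phi> (p n) = {} \<longrightarrow> (\<exists>i\<le>n. p i \<in> X) \<or> adam_wins_end V (p n)) \<and>
   (\<forall>p. (\<forall>n. fplay \<sigma> P p n) \<longrightarrow> (\<exists>i. p i \<in> X) \<or> adam_wins_inf \<phi> p)"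

definition exitset :: "('v \<Rightarrow> ('s,'a) proc set) \<Rightarrow> ('a,'v) tfl \<Rightarrow> ('s,'a,'v) pos set" where
 "exitset V' \<psi> = {(H', FVar Y) | H' Y. Y \<in> fvars \<psi> \<and> H' \<in> procs TS \<and> H' \<notin> V' Y}"

lemma fplay_prefix: "fplay \<sigma> P p n \<Longrightarrow> m \<le> n \<Longrightarrow> fplay \<sigma> P p m"
  unfolding fplay_def by auto

lemma fplay_move: "fplay \<sigma> P p n \<Longrightarrow> i < n \<Longrightarrow> p (Suc i) \<in> moves TS \<phi> (p i)"
  unfolding fplay_def by auto

lemma fplay_shift:
  assumes "fplay \<sigma> P p n" "k \<le> n"
    and "\<And>j. k \<le> j \<Longrightarrow> j < n \<Longrightarrow> \<sigma> (map p [0..<Suc j]) = \<sigma>' (map (\<lambda>i. p (i + k)) [0..<Suc (j - k)])"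
  shows "fplay \<sigma>' (p k) (\<lambda>i. p (i + k)) (n - k)"
proof -
  have "\<forall>i < n - k. p (Suc i + k) \<in> moves TS \<phi> (p (i + k)) \<and>
    (adam_pos (p (i + k)) \<and> \<sigma>' (map (\<lambda>i. p (i + k)) [0..<Suc i]) \<in> moves TS \<phi> (p (i + k)) \<longrightarrow>
       p (Suc i + k) = \<sigma>' (map (\<lambda>i. p (i + k)) [0..<Suc i]))"
  proof (intro allI impI)
    fix i assume i: "i < n - k"
    have e: "\<sigma> (map p [0..<Suc (i + k)]) = \<sigma>' (map (\<lambda>i. p (i + k)) [0..<Suc i])"
      using assms(3)[of "i + k"] i by simp
    have "p (Suc (i + k)) \<in> moves TS \<phi> (p (i + k)) \<and>
      (adam_pos (p (i+k)) \<and> \<sigma> (map p [0..<Suc (i+k)]) \<in> moves TS \<phi> (p (i+k)) \<longrightarrow> p (Suc (i+k)) = \<sigma> (map p [0..<Suc (i+k)]))"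
      using assms(1) i unfolding fplay_def by auto
    then show "p (Suc i + k) \<in> moves TS \<phi> (p (i + k)) \<and>
    (adam_pos (p (i + k)) \<and> \<sigma>' (map (\<lambda>i. p (i + k)) [0..<Suc i]) \<in> moves TS \<phi> (p (i + k)) \<longrightarrow>
       p (Suc i + k) = \<sigma>' (map (\<lambda>i. p (i + k)) [0..<Suc i]))"
      using e by simp
  qed
  then show ?thesis unfolding fplay_def by simp
qed

lemma Inside_mono: "\<psi> \<in> sub \<psi>' \<Longrightarrow> Inside \<psi> Q \<Longrightarrow> Inside \<psi>' Q"
  unfolding Inside_def using sub_trans bvars_sub by (fastforce split: tfl.splits)

lemma wins_mono: "wins X \<psi> P \<sigma> \<Longrightarrow> X \<subseteq> X' \<Longrightarrow> (\<And>Q. Inside \<psi> Q \<Longrightarrow> Inside \<psi>' Q) \<Longrightarrow> wins X' \<psi>' P \<sigma>"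
  unfolding wins_def by blast

lemma first_hit:
  assumes w: "wins X \<psi> Q \<sigma>" and f: "fplay \<sigma> Q q n"
  shows "(\<forall>i\<le>n. Inside \<psi> (q i)) \<or> (\<exists>j\<le>n. q j \<in> X \<and> (\<forall>i<j. Inside \<psi> (q i)))"
proof (cases "\<exists>j\<le>n. q j \<in> X")
  case True
  define j where "j = (LEAST j. j \<le> n \<and> q j \<in> X)"
  have j: "j \<le> n" "q j \<in> X" using LeastI_ex[OF True] unfolding j_def by auto
  have min: "\<And>i. i < j \<Longrightarrow> q i \<notin> X" using not_less_Least j_def j(1) by fastforce
  have "\<forall>i<j. Inside \<psi> (q i)"
  proof (cases j)
    case (Suc j')
    have "fplay \<sigma> Q q j'" using fplay_prefix[OF f] j Suc by auto
    then have "(\<exists>i\<le>j'. q i \<in> X) \<or> (\<forall>i\<le>j'. Inside \<psi> (q i))" using w unfolding wins_def by blast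
    then show ?thesis using min Suc by auto
  qed simp
  then show ?thesis using j by blast
next
  case False
  then show ?thesis using w f unfolding wins_def by blast
qed

lemma step:
  assumes ins: "Inside \<psi> P"
  and W: "\<And>Q. Q \<in> moves TS \<phi> P \<Longrightarrow> Q \<in> A \<Longrightarrow> wins X \<psi> Q (st Q)"
  and ad: "adam_pos P \<Longrightarrow> Q0 \<in> moves TS \<phi> P \<and> Q0 \<in> A"
  and ev: "\<not> adam_pos P \<Longrightarrow> moves TS \<phi> P \<subseteq> A"
  and trm: "moves TS \<phi> P = {} \<Longrightarrow> adam_wins_end V P"
  shows "wins X \<psi> P (\<lambda>h. if length h \<le> 1 then Q0 else st (h ! 1) (tl h))" (is "wins _ _ _ ?\<sigma>")
proof -
  have sh: "p 1 \<in> moves TS \<phi> P \<and> p 1 \<in> A \<and> fplay (st (p 1)) (p 1) (\<lambda>i. p (i + 1)) (n - 1)"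
    if f: "fplay ?\<sigma> P p n" and n: "1 \<le> n" for p n
  proof -
    have p0: "p 0 = P" using f unfolding fplay_def by simp
    have m: "p 1 \<in> moves TS \<phi> P" using fplay_move[OF f, of 0] n p0 by simp
    have "p 1 \<in> A"
    proof (cases "adam_pos P")
      case True
      then have "?\<sigma> (map p [0..<Suc 0]) \<in> moves TS \<phi> (p 0)" using ad p0 by simp
      then have "p 1 = ?\<sigma> (map p [0..<Suc 0])" using f n True p0 unfolding fplay_def by auto
      then show ?thesis using ad True by simp
    next
      case False then show ?thesis using ev m by auto
    qed
    moreover have "fplay (st (p 1)) (p 1) (\<lambda>i. p (i + 1)) (n - 1)"
    proof (rule fplay_shift[OF f n])
      fix j assume "1 \<le> j" "j < n"
      then have a: "map p [0..<Suc j] ! 1 = p 1" by (simp del: upt_Suc)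
      have b: "tl (map p [0..<Suc j]) = map (\<lambda>i. p (i + 1)) [0..<Suc (j - 1)]"
        using drop_map_upt[of 1 "Suc j" p] \<open>1 \<le> j\<close> by (simp add: tl_drop drop_Suc del: upt_Suc)
      have c: "\<not> length (map p [0..<Suc j]) \<le> 1" using \<open>1 \<le> j\<close> by simp
      show "?\<sigma> (map p [0..<Suc j]) = st (p 1) (map (\<lambda>i. p (i + 1)) [0..<Suc (j - 1)])"
        using a b c by (simp only: if_False)
    qed
    ultimately show ?thesis using m by blast
  qed
  show ?thesis unfolding wins_def
  proof (intro conjI allI impI)
    fix p n assume f: "fplay ?\<sigma> P p n"
    have p0: "p 0 = P" using f unfolding fplay_def by simp
    show "(\<exists>i\<le>n. p i \<in> X) \<or> (\<forall>i\<le>n. Inside \<psi> (p i))"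
    proof (cases "n = 0")
      case True then show ?thesis using p0 ins by auto
    next
      case False
      then have s: "p 1 \<in> moves TS \<phi> P" "p 1 \<in> A" "fplay (st (p 1)) (p 1) (\<lambda>i. p (i + 1)) (n - 1)"
        using sh[OF f] by auto
      then have "(\<exists>i\<le>n-1. p (i+1) \<in> X) \<or> (\<forall>i\<le>n-1. Inside \<psi> (p (i+1)))"
        using W[OF s(1,2)] unfolding wins_def by blast
      then show ?thesis
      proof
        assume "\<exists>i\<le>n-1. p (i+1) \<in> X"
        then obtain i where "i \<le> n - 1" "p (i+1) \<in> X" by blast
        moreover have "i + 1 \<le> n" using False \<open>i \<le> n - 1\<close> by linarith
        ultimately show ?thesis by blast
      next
        assume a: "\<forall>i\<le>n-1. Inside \<psi> (p (i+1))"
        have "\<forall>i\<le>n. Inside \<psi> (p i)"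
        proof (intro allI impI)
          fix i assume "i \<le> n"
          then show "Inside \<psi> (p i)" using a p0 ins by (cases i) auto
        qed
        then show ?thesis by blast
      qed
    qed
  next
    fix p n assume fm: "fplay ?\<sigma> P p n \<and> moves TS \<phi> (p n) = {}"
    then have f: "fplay ?\<sigma> P p n" and e: "moves TS \<phi> (p n) = {}" by auto
    have p0: "p 0 = P" using f unfolding fplay_def by simp
    show "(\<exists>i\<le>n. p i \<in> X) \<or> adam_wins_end V (p n)"
    proof (cases "n = 0")
      case True then show ?thesis using p0 trm e by auto
    next
      case False
      then have s: "p 1 \<in> moves TS \<phi> P" "p 1 \<in> A" "fplay (st (p 1)) (p 1) (\<lambda>i. p (i + 1)) (n - 1)"
        using sh[OF f] by auto
      have "p (n - 1 + 1) = p n" using False by simp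
      then have "(\<exists>i\<le>n-1. p (i+1) \<in> X) \<or> adam_wins_end V (p n)"
        using W[OF s(1,2)] s(3) e unfolding wins_def by metis
      then show ?thesis
      proof
        assume "\<exists>i\<le>n-1. p (i+1) \<in> X"
        then obtain i where "i \<le> n - 1" "p (i+1) \<in> X" by blast
        moreover have "i + 1 \<le> n" using False \<open>i \<le> n - 1\<close> by linarith
        ultimately show ?thesis by blast
      qed simp
    qed
  next
    fix p assume f: "\<forall>n. fplay ?\<sigma> P p n"
    have s: "p 1 \<in> moves TS \<phi> P" "p 1 \<in> A" using sh[of p 1] f by auto
    have "\<forall>n. fplay (st (p 1)) (p 1) (\<lambda>i. p (i + 1)) n"
      using sh[of p "Suc _"] f by fastforce
    then have "(\<exists>i. p (i+1) \<in> X) \<or> adam_wins_inf \<phi> (\<lambda>i. p (i + 1))"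
      using W[OF s] unfolding wins_def by blast
    then show "(\<exists>i. p i \<in> X) \<or> adam_wins_inf \<phi> p" using adam_wins_inf_shift by blast
  qed
qed


lemma dist: "distinct (bvars \<phi>)" using pnf unfolding pnf_def by simp

lemma moves_bound:
  assumes b: "Mu Z \<psi> \<in> sub \<phi> \<or> Nu Z \<psi> \<in> sub \<phi>"
  shows "moves TS \<phi> (H, FVar Z) = {(H, \<psi>)}"
proof -
  have e: "(Mu Z \<beta> \<in> sub \<phi> \<or> Nu Z \<beta> \<in> sub \<phi>) \<longleftrightarrow> \<beta> = \<psi>" for \<beta>
    using binder_unique[OF dist, of Z \<psi> \<beta>] binder_unique[OF dist, of Z \<beta> \<psi>] b by blast
  show ?thesis by (simp only: moves.simps e) blast
qed

lemma Inside_FVar[simp]: "Inside \<psi> (H, FVar Y) \<longleftrightarrow> Y \<in> set (bvars \<psi>)"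
  by (simp add: Inside_def)

lemma mu_case:
  assumes bind: "Mu Z \<psi> \<in> sub \<phi>"
    and IH: "\<And>H'. H' \<in> procs TS - L \<Longrightarrow> \<exists>\<sigma>. wins (exitset (V'(Z:=L)) \<psi>) \<psi> (H', \<psi>) \<sigma>"
    and H: "H \<in> procs TS - L"
  shows "\<exists>\<sigma>. wins (exitset V' (Mu Z \<psi>)) (Mu Z \<psi>) (H, FVar Z) \<sigma>"
proof -
  define X where "X = exitset V' (Mu Z \<psi>)"
  define X1 where "X1 = exitset (V'(Z:=L)) \<psi>"
  define P0 where "P0 = (H, FVar Z :: ('a,'v) tfl)"
  define occ where "occ = (\<lambda>Q::('s,'a,'v) pos. snd Q = FVar Z)"
  have Zn: "Z \<notin> set (bvars \<psi>)" using distinct_sub[OF bind dist] by simp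
  have hitcases: "(Q \<in> X \<and> \<not> occ Q) \<or> (occ Q \<and> fst Q \<in> procs TS - L)" if "Q \<in> X1" for Q
    using that unfolding X_def X1_def exitset_def occ_def by (auto split: if_splits)
  have insmu: "Inside (Mu Z \<psi>) Q" if "Inside \<psi> Q" for Q
    using Inside_mono[OF _ that, of "Mu Z \<psi>"] by simp
  have insocc: "\<not> occ Q" if "Inside \<psi> Q" for Q
    using that Zn unfolding occ_def Inside_def by (auto split: tfl.splits)
  have occins: "Inside (Mu Z \<psi>) Q" if "occ Q" for Q
    using that unfolding occ_def Inside_def by auto
  have mvs: "moves TS \<phi> Q = {(fst Q, \<psi>)}" if "occ Q" for Q
    using that moves_bound[of Z \<psi> "fst Q"] bind unfolding occ_def by (cases Q) auto
  define \<sigma>L where "\<sigma>L = (\<lambda>H'. SOME \<sigma>. wins X1 \<psi> (H', \<psi>) \<sigma>)"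
  have wL: "wins X1 \<psi> (H', \<psi>) (\<sigma>L H')" if "H' \<in> procs TS - L" for H'
    using IH[OF that] someI_ex unfolding \<sigma>L_def X1_def by metis
  define lastZ where "lastZ = (\<lambda>h::('s,'a,'v) pos list. Max {k. k < length h \<and> occ (h ! k)})"
  define \<sigma> where "\<sigma> = (\<lambda>h. \<sigma>L (fst (h ! lastZ h)) (drop (Suc (lastZ h)) h))"
  have lastZ_eq: "lastZ (map p [0..<Suc j]) = k"
    if "k \<le> j" "occ (p k)" "\<And>i. k < i \<Longrightarrow> i \<le> j \<Longrightarrow> \<not> occ (p i)" for p j k
  proof -
    have "{i. i < length (map p [0..<Suc j]) \<and> occ (map p [0..<Suc j] ! i)} = {i. i \<le> j \<and> occ (p i)}"
      by (auto simp del: upt_Suc simp add: less_Suc_eq_le)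
    moreover have "Max {i. i \<le> j \<and> occ (p i)} = k"
      by (rule Max_eqI) (use that in \<open>auto simp: not_le[symmetric]\<close>)
    ultimately show ?thesis unfolding lastZ_def by simp
  qed
  have seg: "fplay (\<sigma>L (fst (p k))) (fst (p k), \<psi>) (\<lambda>i. p (i + Suc k)) (m - Suc k)"
    if f: "fplay \<sigma> P0 p n" and k: "occ (p k)" "k < m" "m \<le> n" and no: "\<And>i. k < i \<Longrightarrow> i < m \<Longrightarrow> \<not> occ (p i)"
    for p n k m
  proof -
    have fm: "fplay \<sigma> P0 p m" using fplay_prefix[OF f k(3)] .
    have "p (Suc k) \<in> moves TS \<phi> (p k)" using fplay_move[OF fm k(2)] .
    then have pk: "p (Suc k) = (fst (p k), \<psi>)" using mvs[OF k(1)] by simp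
    have "fplay (\<sigma>L (fst (p k))) (p (Suc k)) (\<lambda>i. p (i + Suc k)) (m - Suc k)"
    proof (rule fplay_shift[OF fm])
      show "Suc k \<le> m" using k by simp
    next
      fix j assume j: "Suc k \<le> j" "j < m"
      have "lastZ (map p [0..<Suc j]) = k" by (rule lastZ_eq) (use j k no in auto)
      then have "\<sigma> (map p [0..<Suc j]) = \<sigma>L (fst (p k)) (drop (Suc k) (map p [0..<Suc j]))"
        unfolding \<sigma>_def using j by (simp del: upt_Suc)
      also have "\<dots> = \<sigma>L (fst (p k)) (map (\<lambda>i. p (i + Suc k)) [0..<Suc (j - Suc k)])"
      proof -
        have e: "Suc j - Suc k = Suc (j - Suc k)" using j by simp
        have d: "drop (Suc k) (map p [0..<Suc j]) = map (\<lambda>i. p (i + Suc k)) [0..<Suc j - Suc k]"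
          by (rule drop_map_upt) (use j in simp)
        show ?thesis unfolding d e ..
      qed
      finally show "\<sigma> (map p [0..<Suc j]) = \<sigma>L (fst (p k)) (map (\<lambda>i. p (i + Suc k)) [0..<Suc (j - Suc k)])" .
    qed
    then show ?thesis using pk by simp
  qed
  have p0: "p 0 = P0" if "fplay \<sigma> P0 p n" for p n using that unfolding fplay_def by simp
  have claim: "(\<exists>i\<le>m. p i \<in> X) \<or> (fst (p m) \<in> procs TS - L \<and> (\<forall>i\<le>m. Inside (Mu Z \<psi>) (p i)))"
    if f: "fplay \<sigma> P0 p n" and "m \<le> n" "occ (p m)" for p n m
    using that(2,3)
  proof (induction m rule: less_induct)
    case (less m)
    show ?case
    proof (cases "m = 0")
      case True then show ?thesis using p0[OF f] H unfolding P0_def by (auto simp: occins occ_def)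
    next
      case False
      define K where "K = {k. k < m \<and> occ (p k)}"
      have K: "0 \<in> K" "finite K" using False p0[OF f] unfolding K_def P0_def occ_def by auto
      define k where "k = Max K"
      have kK: "k \<in> K" unfolding k_def using Max_in[OF K(2)] K(1) by blast
      have k: "k < m" "occ (p k)" using kK unfolding K_def by auto
      have no: "\<not> occ (p i)" if "k < i" "i < m" for i
      proof
        assume "occ (p i)"
        then have "i \<in> K" using that unfolding K_def by simp
        then have "i \<le> k" unfolding k_def using Max_ge[OF K(2)] by blast
        then show False using that by simp
      qed
      from less.IH[OF k(1)] k less.prems
      have ih: "(\<exists>i\<le>k. p i \<in> X) \<or> (fst (p k) \<in> procs TS - L \<and> (\<forall>i\<le>k. Inside (Mu Z \<psi>) (p i)))" by simp
      show ?thesis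
      proof (cases "\<exists>i\<le>k. p i \<in> X")
        case True
        then obtain i where "i \<le> k" "p i \<in> X" by blast
        moreover have "i \<le> m" using \<open>i \<le> k\<close> k(1) by simp
        ultimately show ?thesis by blast
      next
        case nh: False
        with ih have Hk: "fst (p k) \<in> procs TS - L" and ik: "\<forall>i\<le>k. Inside (Mu Z \<psi>) (p i)" by auto
        have sg: "fplay (\<sigma>L (fst (p k))) (fst (p k), \<psi>) (\<lambda>i. p (i + Suc k)) (m - Suc k)"
          by (rule seg[OF f k(2) k(1) less.prems(1)]) (use no in auto)
        from first_hit[OF wL[OF Hk] sg]
        show ?thesis
        proof
          assume "\<forall>i\<le>m - Suc k. Inside \<psi> (p (i + Suc k))"
          then have "Inside \<psi> (p m)" using k(1) by (metis Suc_leI diff_add le_refl)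
          then show ?thesis using insocc less.prems(2) by blast
        next
          assume "\<exists>j\<le>m - Suc k. p (j + Suc k) \<in> X1 \<and> (\<forall>i<j. Inside \<psi> (p (i + Suc k)))"
          then obtain j where j: "j \<le> m - Suc k" "p (j + Suc k) \<in> X1" "\<forall>i<j. Inside \<psi> (p (i + Suc k))" by blast
          from hitcases[OF j(2)] show ?thesis
          proof
            assume "p (j + Suc k) \<in> X \<and> \<not> occ (p (j + Suc k))"
            then show ?thesis using j(1) k(1) by (intro disjI1 exI[of _ "j + Suc k"]) auto
          next
            assume a: "occ (p (j + Suc k)) \<and> fst (p (j + Suc k)) \<in> procs TS - L"
            have jm: "j + Suc k = m" using no[of "j + Suc k"] a j(1) k(1) by force
            have "\<forall>i\<le>m. Inside (Mu Z \<psi>) (p i)"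
            proof (intro allI impI)
              fix i assume "i \<le> m"
              show "Inside (Mu Z \<psi>) (p i)"
              proof (cases "i \<le> k")
                case True then show ?thesis using ik by auto
              next
                case False
                show ?thesis
                proof (cases "i = m")
                  case True then show ?thesis using occins less.prems(2) by simp
                next
                  case False
                  then have "i - Suc k < j" using \<open>\<not> i \<le> k\<close> \<open>i \<le> m\<close> jm by linarith
                  then have "Inside \<psi> (p (i - Suc k + Suc k))" using j(3) by blast
                  then show ?thesis using insmu \<open>\<not> i \<le> k\<close> by (simp add: Suc_diff_le not_le Suc_leI)
                qed
              qed
            qed
            then show ?thesis using a jm by simp
          qed
        qed
      qed
    qed
  qed

  have wmain: "wins X (Mu Z \<psi>) P0 \<sigma>"
    unfolding wins_def
  proof (intro conjI allI impI)
    fix p n assume f: "fplay \<sigma> P0 p n"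
    define K where "K = {k. k \<le> n \<and> occ (p k)}"
    have K: "0 \<in> K" "finite K" using p0[OF f] unfolding K_def P0_def occ_def by auto
    define k where "k = Max K"
    have kK: "k \<in> K" unfolding k_def using Max_in[OF K(2)] K(1) by blast
    have k: "k \<le> n" "occ (p k)" using kK unfolding K_def by auto
    have no: "\<not> occ (p i)" if "k < i" "i \<le> n" for i
    proof
      assume "occ (p i)"
      then have "i \<in> K" using that unfolding K_def by simp
      then have "i \<le> k" unfolding k_def using Max_ge[OF K(2)] by blast
      then show False using that by simp
    qed
    from claim[OF f k]
    have ih: "(\<exists>i\<le>k. p i \<in> X) \<or> (fst (p k) \<in> procs TS - L \<and> (\<forall>i\<le>k. Inside (Mu Z \<psi>) (p i)))" .
    show "(\<exists>i\<le>n. p i \<in> X) \<or> (\<forall>i\<le>n. Inside (Mu Z \<psi>) (p i))"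
    proof (cases "\<exists>i\<le>k. p i \<in> X")
      case True
      then obtain i where "i \<le> k" "p i \<in> X" by blast
      moreover have "i \<le> n" using \<open>i \<le> k\<close> k(1) by simp
      ultimately show ?thesis by blast
    next
      case nh: False
      with ih have Hk: "fst (p k) \<in> procs TS - L" and ik: "\<forall>i\<le>k. Inside (Mu Z \<psi>) (p i)" by auto
      show ?thesis
      proof (cases "k = n")
        case True then show ?thesis using ik by blast
      next
        case False
        then have kn: "k < n" using k(1) by simp
        have sg: "fplay (\<sigma>L (fst (p k))) (fst (p k), \<psi>) (\<lambda>i. p (i + Suc k)) (n - Suc k)"
          by (rule seg[OF f k(2) kn le_refl]) (use no in auto)
        from first_hit[OF wL[OF Hk] sg]
        show ?thesis
        proof
          assume a: "\<forall>i\<le>n - Suc k. Inside \<psi> (p (i + Suc k))"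
          have "\<forall>i\<le>n. Inside (Mu Z \<psi>) (p i)"
          proof (intro allI impI)
            fix i assume "i \<le> n"
            show "Inside (Mu Z \<psi>) (p i)"
            proof (cases "i \<le> k")
              case True then show ?thesis using ik by auto
            next
              case False
              then have "i - Suc k \<le> n - Suc k" using \<open>i \<le> n\<close> by linarith
              then have "Inside \<psi> (p (i - Suc k + Suc k))" using a by blast
              moreover have "i - Suc k + Suc k = i" using False by simp
              ultimately show ?thesis using insmu by simp
            qed
          qed
          then show ?thesis by blast
        next
          assume "\<exists>j\<le>n - Suc k. p (j + Suc k) \<in> X1 \<and> (\<forall>i<j. Inside \<psi> (p (i + Suc k)))"
          then obtain j where j: "j \<le> n - Suc k" "p (j + Suc k) \<in> X1" by blast
          have jn: "j + Suc k \<le> n" "k < j + Suc k" using j(1) kn by auto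
          from hitcases[OF j(2)] show ?thesis
          proof
            assume "p (j + Suc k) \<in> X \<and> \<not> occ (p (j + Suc k))"
            then show ?thesis using jn by blast
          next
            assume "occ (p (j + Suc k)) \<and> fst (p (j + Suc k)) \<in> procs TS - L"
            then show ?thesis using no[OF jn(2) jn(1)] by simp
          qed
        qed
      qed
    qed
  next
    fix p n assume fm: "fplay \<sigma> P0 p n \<and> moves TS \<phi> (p n) = {}"
    then have f: "fplay \<sigma> P0 p n" and em: "moves TS \<phi> (p n) = {}" by auto
    define K where "K = {k. k \<le> n \<and> occ (p k)}"
    have K: "0 \<in> K" "finite K" using p0[OF f] unfolding K_def P0_def occ_def by auto
    define k where "k = Max K"
    have kK: "k \<in> K" unfolding k_def using Max_in[OF K(2)] K(1) by blast
    have k: "k \<le> n" "occ (p k)" using kK unfolding K_def by auto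
    have no: "\<not> occ (p i)" if "k < i" "i \<le> n" for i
    proof
      assume "occ (p i)"
      then have "i \<in> K" using that unfolding K_def by simp
      then have "i \<le> k" unfolding k_def using Max_ge[OF K(2)] by blast
      then show False using that by simp
    qed
    from claim[OF f k]
    have ih: "(\<exists>i\<le>k. p i \<in> X) \<or> (fst (p k) \<in> procs TS - L \<and> (\<forall>i\<le>k. Inside (Mu Z \<psi>) (p i)))" .
    show "(\<exists>i\<le>n. p i \<in> X) \<or> adam_wins_end V (p n)"
    proof (cases "\<exists>i\<le>k. p i \<in> X")
      case True
      then obtain i where "i \<le> k" "p i \<in> X" by blast
      moreover have "i \<le> n" using \<open>i \<le> k\<close> k(1) by simp
      ultimately show ?thesis by blast
    next
      case nh: False
      with ih have Hk: "fst (p k) \<in> procs TS - L" by auto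
      have kn: "k < n"
      proof (rule ccontr)
        assume "\<not> k < n"
        then have "k = n" using k(1) by simp
        then show False using mvs[OF k(2)] em by simp
      qed
      have sg: "fplay (\<sigma>L (fst (p k))) (fst (p k), \<psi>) (\<lambda>i. p (i + Suc k)) (n - Suc k)"
        by (rule seg[OF f k(2) kn le_refl]) (use no in auto)
      have en: "p (n - Suc k + Suc k) = p n" using kn by simp
      have "(\<exists>j\<le>n - Suc k. p (j + Suc k) \<in> X1) \<or> adam_wins_end V (p n)"
        using wL[OF Hk] sg em en unfolding wins_def by metis
      then show ?thesis
      proof
        assume "\<exists>j\<le>n - Suc k. p (j + Suc k) \<in> X1"
        then obtain j where j: "j \<le> n - Suc k" "p (j + Suc k) \<in> X1" by blast
        have jn: "j + Suc k \<le> n" "k < j + Suc k" using j(1) kn by auto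
        from hitcases[OF j(2)] show ?thesis
        proof
          assume "p (j + Suc k) \<in> X \<and> \<not> occ (p (j + Suc k))"
          then show ?thesis using jn by blast
        next
          assume "occ (p (j + Suc k)) \<and> fst (p (j + Suc k)) \<in> procs TS - L"
          then show ?thesis using no[OF jn(2) jn(1)] by simp
        qed
      qed simp
    qed
  next
    fix p assume f: "\<forall>n. fplay \<sigma> P0 p n"
    show "(\<exists>i. p i \<in> X) \<or> adam_wins_inf \<phi> p"
    proof (cases "finite {k. occ (p k)}")
      case True
      define K where "K = {k. occ (p k)}"
      have "p 0 = P0" using p0[OF f[rule_format, of 0]] .
      then have K: "0 \<in> K" "finite K" using True unfolding K_def P0_def occ_def by auto
      define k where "k = Max K"
      have kK: "k \<in> K" unfolding k_def using Max_in[OF K(2)] K(1) by blast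
      have k: "occ (p k)" using kK unfolding K_def by auto
      have no: "\<not> occ (p i)" if "k < i" for i
      proof
        assume "occ (p i)"
        then have "i \<in> K" using that unfolding K_def by simp
        then have "i \<le> k" unfolding k_def using Max_ge[OF K(2)] by blast
        then show False using that by simp
      qed
      from claim[OF f[rule_format, of k] le_refl k]
      have ih: "(\<exists>i\<le>k. p i \<in> X) \<or> (fst (p k) \<in> procs TS - L \<and> (\<forall>i\<le>k. Inside (Mu Z \<psi>) (p i)))" .
      show ?thesis
      proof (cases "\<exists>i\<le>k. p i \<in> X")
        case True then show ?thesis by blast
      next
        case nh: False
        with ih have Hk: "fst (p k) \<in> procs TS - L" by auto
        have sg: "fplay (\<sigma>L (fst (p k))) (fst (p k), \<psi>) (\<lambda>i. p (i + Suc k)) n'" for n'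
        proof -
          have "fplay (\<sigma>L (fst (p k))) (fst (p k), \<psi>) (\<lambda>i. p (i + Suc k)) (n' + Suc k - Suc k)"
            by (rule seg[OF f[rule_format, of "n' + Suc k"] k]) (use no in auto)
          then show ?thesis by simp
        qed
        then have "(\<exists>j. p (j + Suc k) \<in> X1) \<or> adam_wins_inf \<phi> (\<lambda>i. p (i + Suc k))"
          using wL[OF Hk] unfolding wins_def by blast
        then show ?thesis
        proof
          assume "\<exists>j. p (j + Suc k) \<in> X1"
          then obtain j where j: "p (j + Suc k) \<in> X1" by blast
          from hitcases[OF j] show ?thesis
          proof
            assume "p (j + Suc k) \<in> X \<and> \<not> occ (p (j + Suc k))"
            then show ?thesis by blast
          next
            assume "occ (p (j + Suc k)) \<and> fst (p (j + Suc k)) \<in> procs TS - L"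
            then show ?thesis using no[of "j + Suc k"] by simp
          qed
        next
          assume "adam_wins_inf \<phi> (\<lambda>i. p (i + Suc k))"
          then show ?thesis using adam_wins_inf_shift by blast
        qed
      qed
    next
      case inf: False
      show ?thesis
      proof (cases "\<exists>i. p i \<in> X")
        case True then show ?thesis by blast
      next
        case nh: False
        have allin: "Inside (Mu Z \<psi>) (p i)" for i
        proof -
          obtain m where m0: "m \<in> {k. occ (p k)}" "\<not> m \<le> i" using inf unfolding finite_nat_set_iff_bounded_le by auto
          then have m: "i \<le> m" "occ (p m)" by auto
          from claim[OF f[rule_format, of m] le_refl m(2)] nh m(1) show ?thesis by auto
        qed
        have "adam_wins_inf \<phi> p"
          unfolding adam_wins_inf_def
        proof (rule exI[of _ Z], rule exI[of _ \<psi>], intro conjI ballI)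
          show "Z \<in> inf_vars p" using inf unfolding inf_vars_def occ_def by simp
          show "Mu Z \<psi> \<in> sub \<phi>" by (rule bind)
          fix Z' assume "Z' \<in> inf_vars p"
          then have "infinite {i. snd (p i) = FVar Z'}" unfolding inf_vars_def by simp
          then obtain i where i: "snd (p i) = FVar Z'" using not_finite_existsD by blast
          have "Inside (Mu Z \<psi>) (p i)" by (rule allin)
          then have "Z' \<in> set (bvars (Mu Z \<psi>))" using i unfolding Inside_def by simp
          then show "\<exists>\<psi>'. Mu Z' \<psi>' \<in> sub (Mu Z \<psi>) \<or> Nu Z' \<psi>' \<in> sub (Mu Z \<psi>)" by (rule bvars_binder)
        qed
        then show ?thesis by blast
      qed
    qed
  qed
  have "wins (exitset V' (Mu Z \<psi>)) (Mu Z \<psi>) (H, FVar Z) \<sigma>" using wmain unfolding X_def P0_def .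
  note [[show_types]]
  show ?thesis
    apply (rule exI[of _ \<sigma>])
    by (rule \<open>wins (exitset V' (Mu Z \<psi>)) (Mu Z \<psi>) (H, FVar Z) \<sigma>\<close>)
qed


lemma least_pos: "\<exists>k::nat. 0 < k \<and> P k \<Longrightarrow> \<exists>k. 0 < k \<and> P k \<and> (\<forall>i. 0 < i \<longrightarrow> i < k \<longrightarrow> \<not> P i)"
  using exists_least_iff[of "\<lambda>k. 0 < k \<and> P k"] by blast

lemma nu_case:
  assumes bind: "Nu Z \<psi> \<in> sub \<phi>"
    and IH: "\<And>Q H'. Q \<subseteq> procs TS \<Longrightarrow> H' \<in> procs TS \<Longrightarrow> H' \<notin> sem TS (V'(Z:=Q)) \<psi> \<Longrightarrow>
       \<exists>\<sigma>. wins (exitset (V'(Z:=Q)) \<psi>) \<psi> (H', \<psi>) \<sigma>"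
    and H: "H \<in> procs TS" "H \<notin> sem TS V' (Nu Z \<psi>)"
  shows "\<exists>\<sigma>. wins (exitset V' (Nu Z \<psi>)) (Nu Z \<psi>) (H, FVar Z) \<sigma>"
proof -
  define X where "X = exitset V' (Nu Z \<psi>)"
  define W where "W = {H' \<in> procs TS. \<exists>\<sigma>. wins X (Nu Z \<psi>) (H', FVar Z :: ('a,'v) tfl) \<sigma>}"
  define occ where "occ = (\<lambda>Q::('s,'a,'v) pos. snd Q = FVar Z)"
  have Zn: "Z \<notin> set (bvars \<psi>)" using distinct_sub[OF bind dist] by simp
  have insnu: "Inside (Nu Z \<psi>) Q" if "Inside \<psi> Q" for Q
    using Inside_mono[OF _ that, of "Nu Z \<psi>"] by simp
  have insocc: "\<not> occ Q" if "Inside \<psi> Q" for Q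
    using that Zn unfolding occ_def Inside_def by (auto split: tfl.splits)
  have occins: "Inside (Nu Z \<psi>) Q" if "occ Q" for Q
    using that unfolding occ_def Inside_def by auto
  have mvs: "moves TS \<phi> Q = {(fst Q, \<psi>)}" if "occ Q" for Q
    using that moves_bound[of Z \<psi> "fst Q"] bind unfolding occ_def by (cases Q) auto
  define \<sigma>W where "\<sigma>W = (\<lambda>H''. SOME \<sigma>. wins X (Nu Z \<psi>) (H'', FVar Z :: ('a,'v) tfl) \<sigma>)"
  have wW: "wins X (Nu Z \<psi>) (H'', FVar Z) (\<sigma>W H'')" if "H'' \<in> W" for H''
    using that someI_ex unfolding \<sigma>W_def W_def by (metis (mono_tags, lifting) mem_Collect_eq)
  have gW: "procs TS - sem TS (V'(Z := procs TS - W)) \<psi> \<subseteq> W"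
  proof
    fix H' assume H': "H' \<in> procs TS - sem TS (V'(Z := procs TS - W)) \<psi>"
    define X1 where "X1 = exitset (V'(Z := procs TS - W)) \<psi>"
    obtain \<sigma>1 where w1: "wins X1 \<psi> (H', \<psi>) \<sigma>1" using IH[of "procs TS - W" H'] H' unfolding X1_def by auto
    have hitcases: "(Q \<in> X \<and> \<not> occ Q) \<or> (occ Q \<and> fst Q \<in> W)" if "Q \<in> X1" for Q
      using that unfolding X_def X1_def exitset_def occ_def by (auto split: if_splits)
    define P0 where "P0 = (H', FVar Z :: ('a,'v) tfl)"
    have occP0: "occ P0" unfolding P0_def occ_def by simp
    define fZ where "fZ = (\<lambda>h::('s,'a,'v) pos list. LEAST k. 0 < k \<and> k < length h \<and> occ (h ! k))"
    define \<sigma> where "\<sigma> = (\<lambda>h. if \<exists>k. 0 < k \<and> k < length h \<and> occ (h ! k)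
                     then \<sigma>W (fst (h ! fZ h)) (drop (fZ h) h) else \<sigma>1 (drop 1 h))"
    have p0: "p 0 = P0" if "fplay \<sigma> P0 p n" for p n using that unfolding fplay_def by simp
    have seg1: "fplay \<sigma>1 (H', \<psi>) (\<lambda>i. p (i + 1)) (m - 1)"
      if f: "fplay \<sigma> P0 p n" and m: "1 \<le> m" "m \<le> n" and no: "\<And>i. 0 < i \<Longrightarrow> i < m \<Longrightarrow> \<not> occ (p i)" for p n m
    proof -
      have fm: "fplay \<sigma> P0 p m" using fplay_prefix[OF f m(2)] .
      have "p (Suc 0) \<in> moves TS \<phi> P0" using fplay_move[OF fm, of 0] m p0[OF f] by simp
      then have "p (Suc 0) = (fst P0, \<psi>)" unfolding mvs[OF occP0] by simp
      then have p1: "p 1 = (H', \<psi>)" unfolding P0_def by simp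
      have "fplay \<sigma>1 (p 1) (\<lambda>i. p (i + 1)) (m - 1)"
      proof (rule fplay_shift[OF fm m(1)])
        fix j assume j: "1 \<le> j" "j < m"
        have c: "\<not> (\<exists>k. 0 < k \<and> k < length (map p [0..<Suc j]) \<and> occ (map p [0..<Suc j] ! k))"
        proof
          assume "\<exists>k. 0 < k \<and> k < length (map p [0..<Suc j]) \<and> occ (map p [0..<Suc j] ! k)"
          then obtain k where k: "0 < k" "k < Suc j" "occ (map p [0..<Suc j] ! k)" by auto
          then have "occ (p k)" by (simp del: upt_Suc)
          then show False using no[of k] k j by simp
        qed
        have e: "Suc j - 1 = Suc (j - 1)" using j by simp
        have d: "drop 1 (map p [0..<Suc j]) = map (\<lambda>i. p (i + 1)) [0..<Suc j - 1]"
          by (rule drop_map_upt) (use j in simp)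
        show "\<sigma> (map p [0..<Suc j]) = \<sigma>1 (map (\<lambda>i. p (i + 1)) [0..<Suc (j - 1)])"
          unfolding \<sigma>_def using c d e by (simp only: if_False)
      qed
      then show ?thesis using p1 by simp
    qed
    have seg2: "fplay (\<sigma>W (fst (p k))) (p k) (\<lambda>i. p (i + k)) (n - k)"
      if f: "fplay \<sigma> P0 p n" and k: "0 < k" "k \<le> n" "occ (p k)"
        and no: "\<And>i. 0 < i \<Longrightarrow> i < k \<Longrightarrow> \<not> occ (p i)" for p n k
    proof (rule fplay_shift[OF f k(2)])
      fix j assume j: "k \<le> j" "j < n"
      let ?h = "map p [0..<Suc j]"
      have c: "0 < k \<and> k < length ?h \<and> occ (?h ! k)" using k j by (simp del: upt_Suc)
      have fz: "fZ ?h = k" unfolding fZ_def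
      proof (rule Least_equality)
        show "0 < k \<and> k < length ?h \<and> occ (?h ! k)" by (rule c)
        fix y assume y: "0 < y \<and> y < length ?h \<and> occ (?h ! y)"
        then have y1: "y < Suc j" and y2: "occ (map p [0..<Suc j] ! y)" by auto
        have "map p [0..<Suc j] ! y = p y" using y1 by (simp only: nth_map length_upt nth_upt) simp
        then have "occ (p y)" using y2 by simp
        then show "k \<le> y" using no[of y] y by (meson not_le)
      qed
      have e: "Suc j - k = Suc (j - k)" using j by simp
      have d: "drop k ?h = map (\<lambda>i. p (i + k)) [0..<Suc j - k]"
        by (rule drop_map_upt) (use j in simp)
      have hk: "?h ! k = p k" using j by (simp del: upt_Suc)
      show "\<sigma> ?h = \<sigma>W (fst (p k)) (map (\<lambda>i. p (i + k)) [0..<Suc (j - k)])"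
        unfolding \<sigma>_def using c fz d e hk by (auto simp del: upt_Suc)
    qed
    have claimB: "(\<exists>i\<le>k. p i \<in> X) \<or> (fst (p k) \<in> W \<and> (\<forall>i<k. Inside (Nu Z \<psi>) (p i)) \<and>
          fplay (\<sigma>W (fst (p k))) (fst (p k), FVar Z) (\<lambda>i. p (i + k)) (n - k))"
      if f: "fplay \<sigma> P0 p n" and k: "0 < k" "k \<le> n" "occ (p k)"
        and no: "\<And>i. 0 < i \<Longrightarrow> i < k \<Longrightarrow> \<not> occ (p i)" for p n k
    proof -
      obtain Hk where pk: "p k = (Hk, FVar Z)" using k(3) unfolding occ_def by (cases "p k") auto
      have s1: "fplay \<sigma>1 (H', \<psi>) (\<lambda>i. p (i + 1)) (k - 1)"
        by (rule seg1[OF f _ k(2)]) (use k no in auto)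
      from first_hit[OF w1 s1] show ?thesis
      proof
        assume "\<forall>i\<le>k - 1. Inside \<psi> (p (i + 1))"
        then have "Inside \<psi> (p (k - 1 + 1))" by blast
        then show ?thesis using insocc k by simp
      next
        assume "\<exists>j\<le>k - 1. p (j + 1) \<in> X1 \<and> (\<forall>i<j. Inside \<psi> (p (i + 1)))"
        then obtain j where j: "j \<le> k - 1" "p (j + 1) \<in> X1" "\<forall>i<j. Inside \<psi> (p (i + 1))" by blast
        from hitcases[OF j(2)] show ?thesis
        proof
          assume "p (j + 1) \<in> X \<and> \<not> occ (p (j + 1))"
          moreover have "j + 1 \<le> k" using j(1) k(1) by simp
          ultimately show ?thesis by blast
        next
          assume a: "occ (p (j + 1)) \<and> fst (p (j + 1)) \<in> W"
          have jk: "j + 1 = k" using no[of "j + 1"] a j(1) k(1) by force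
          have "\<forall>i<k. Inside (Nu Z \<psi>) (p i)"
          proof (intro allI impI)
            fix i assume "i < k"
            show "Inside (Nu Z \<psi>) (p i)"
            proof (cases i)
              case 0 then show ?thesis using p0[OF f] occP0 occins by simp
            next
              case (Suc i')
              then have "i' < j" using \<open>i < k\<close> jk by simp
              then have "Inside \<psi> (p (i' + 1))" using j(3) by blast
              then show ?thesis using insnu Suc by simp
            qed
          qed
          moreover have "fplay (\<sigma>W (fst (p k))) (p k) (\<lambda>i. p (i + k)) (n - k)"
            by (rule seg2[OF f k]) (use no in auto)
          ultimately show ?thesis using a jk pk by simp
        qed
      qed
    qed
    have wmain: "wins X (Nu Z \<psi>) P0 \<sigma>"
      unfolding wins_def
    proof (intro conjI allI impI)
      fix p n assume f: "fplay \<sigma> P0 p n"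
      show "(\<exists>i\<le>n. p i \<in> X) \<or> (\<forall>i\<le>n. Inside (Nu Z \<psi>) (p i))"
      proof (cases "\<exists>k. 0 < k \<and> (k \<le> n \<and> occ (p k))")
        case True
        from least_pos[OF True] obtain k where k: "0 < k" "k \<le> n" "occ (p k)"
          and no0: "\<forall>i. 0 < i \<longrightarrow> i < k \<longrightarrow> \<not> (i \<le> n \<and> occ (p i))" by blast
        have no: "\<not> occ (p i)" if "0 < i" "i < k" for i
        proof -
          have "i \<le> n" using that k(2) by simp
          then show ?thesis using no0 that by blast
        qed
        from claimB[OF f k no] show ?thesis
        proof
          assume "\<exists>i\<le>k. p i \<in> X"
          then obtain i where "i \<le> k" "p i \<in> X" by blast
          moreover have "i \<le> n" using \<open>i \<le> k\<close> k(2) by simp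
          ultimately show ?thesis by blast
        next
          assume a: "fst (p k) \<in> W \<and> (\<forall>i<k. Inside (Nu Z \<psi>) (p i)) \<and>
            fplay (\<sigma>W (fst (p k))) (fst (p k), FVar Z) (\<lambda>i. p (i + k)) (n - k)"
          then have "(\<exists>i\<le>n - k. p (i + k) \<in> X) \<or> (\<forall>i\<le>n - k. Inside (Nu Z \<psi>) (p (i + k)))"
            using wW unfolding wins_def by blast
          then show ?thesis
          proof
            assume "\<exists>i\<le>n - k. p (i + k) \<in> X"
            then obtain i where "i \<le> n - k" "p (i + k) \<in> X" by blast
            moreover have "i + k \<le> n" using \<open>i \<le> n - k\<close> k(2) by simp
            ultimately show ?thesis by blast
          next
            assume b: "\<forall>i\<le>n - k. Inside (Nu Z \<psi>) (p (i + k))"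
            have "Inside (Nu Z \<psi>) (p i)" if "i \<le> n" for i
            proof (cases "i < k")
              case True then show ?thesis using a by blast
            next
              case False
              then have "i - k \<le> n - k" "i - k + k = i" using that by auto
              then show ?thesis using b by metis
            qed
            then show ?thesis by blast
          qed
        qed
      next
        case False
        show ?thesis
        proof (cases "n = 0")
          case True then show ?thesis using p0[OF f] occP0 occins by simp
        next
          case n0: False
          have nocc: "\<And>i. 0 < i \<Longrightarrow> i \<le> n \<Longrightarrow> \<not> occ (p i)" using False by blast
          have s1: "fplay \<sigma>1 (H', \<psi>) (\<lambda>i. p (i + 1)) (n - 1)"
            by (rule seg1[OF f _ le_refl]) (use n0 nocc in auto)
          from first_hit[OF w1 s1] show ?thesis
          proof
            assume b: "\<forall>i\<le>n - 1. Inside \<psi> (p (i + 1))"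
            have "Inside (Nu Z \<psi>) (p i)" if "i \<le> n" for i
            proof (cases i)
              case 0 then show ?thesis using p0[OF f] occP0 occins by simp
            next
              case (Suc i') then show ?thesis using b that insnu by simp
            qed
            then show ?thesis by blast
          next
            assume "\<exists>j\<le>n - 1. p (j + 1) \<in> X1 \<and> (\<forall>i<j. Inside \<psi> (p (i + 1)))"
            then obtain j where j: "j \<le> n - 1" "p (j + 1) \<in> X1" by blast
            from hitcases[OF j(2)] show ?thesis
            proof
              assume "p (j + 1) \<in> X \<and> \<not> occ (p (j + 1))"
              moreover have "j + 1 \<le> n" using j(1) n0 by simp
              ultimately show ?thesis by blast
            next
              assume "occ (p (j + 1)) \<and> fst (p (j + 1)) \<in> W"
              moreover have "j + 1 \<le> n" using j(1) n0 by simp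
              ultimately show ?thesis using nocc[of "j + 1"] by simp
            qed
          qed
        qed
      qed
    next
      fix p n assume fm: "fplay \<sigma> P0 p n \<and> moves TS \<phi> (p n) = {}"
      then have f: "fplay \<sigma> P0 p n" and em: "moves TS \<phi> (p n) = {}" by auto
      show "(\<exists>i\<le>n. p i \<in> X) \<or> adam_wins_end V (p n)"
      proof (cases "\<exists>k. 0 < k \<and> (k \<le> n \<and> occ (p k))")
        case True
        from least_pos[OF True] obtain k where k: "0 < k" "k \<le> n" "occ (p k)"
          and no0: "\<forall>i. 0 < i \<longrightarrow> i < k \<longrightarrow> \<not> (i \<le> n \<and> occ (p i))" by blast
        have no: "\<not> occ (p i)" if "0 < i" "i < k" for i
        proof -
          have "i \<le> n" using that k(2) by simp
          then show ?thesis using no0 that by blast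
        qed
        from claimB[OF f k no] show ?thesis
        proof
          assume "\<exists>i\<le>k. p i \<in> X"
          then obtain i where "i \<le> k" "p i \<in> X" by blast
          moreover have "i \<le> n" using \<open>i \<le> k\<close> k(2) by simp
          ultimately show ?thesis by blast
        next
          assume a: "fst (p k) \<in> W \<and> (\<forall>i<k. Inside (Nu Z \<psi>) (p i)) \<and>
            fplay (\<sigma>W (fst (p k))) (fst (p k), FVar Z) (\<lambda>i. p (i + k)) (n - k)"
          have en: "p (n - k + k) = p n" using k(2) by simp
          have wk: "wins X (Nu Z \<psi>) (fst (p k), FVar Z) (\<sigma>W (fst (p k)))" using wW a by blast
          have mx: "\<And>q m. fplay (\<sigma>W (fst (p k))) (fst (p k), FVar Z) q m \<Longrightarrow> moves TS \<phi> (q m) = {} \<Longrightarrow>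
              (\<exists>i\<le>m. q i \<in> X) \<or> adam_wins_end V (q m)" using wk unfolding wins_def by blast
          have "(\<exists>i\<le>n - k. p (i + k) \<in> X) \<or> adam_wins_end V (p (n - k + k))"
            by (rule mx) (use a em en in auto)
          then have "(\<exists>i\<le>n - k. p (i + k) \<in> X) \<or> adam_wins_end V (p n)" using en by simp
          then show ?thesis
          proof
            assume "\<exists>i\<le>n - k. p (i + k) \<in> X"
            then obtain i where "i \<le> n - k" "p (i + k) \<in> X" by blast
            moreover have "i + k \<le> n" using \<open>i \<le> n - k\<close> k(2) by simp
            ultimately show ?thesis by blast
          qed simp
        qed
      next
        case False
        show ?thesis
        proof (cases "n = 0")
          case True then show ?thesis using p0[OF f] occP0 mvs em by simp
        next
          case n0: False
          have nocc: "\<And>i. 0 < i \<Longrightarrow> i \<le> n \<Longrightarrow> \<not> occ (p i)" using False by blast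
          have s1: "fplay \<sigma>1 (H', \<psi>) (\<lambda>i. p (i + 1)) (n - 1)"
            by (rule seg1[OF f _ le_refl]) (use n0 nocc in auto)
          have en: "p (n - 1 + 1) = p n" using n0 by simp
          have mx: "\<And>q m. fplay \<sigma>1 (H', \<psi>) q m \<Longrightarrow> moves TS \<phi> (q m) = {} \<Longrightarrow>
              (\<exists>i\<le>m. q i \<in> X1) \<or> adam_wins_end V (q m)" using w1 unfolding wins_def by blast
          have "(\<exists>j\<le>n - 1. p (j + 1) \<in> X1) \<or> adam_wins_end V (p (n - 1 + 1))"
            by (rule mx) (use s1 em en in auto)
          then have "(\<exists>j\<le>n - 1. p (j + 1) \<in> X1) \<or> adam_wins_end V (p n)" using en by simp
          then show ?thesis
          proof
            assume "\<exists>j\<le>n - 1. p (j + 1) \<in> X1"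
            then obtain j where j: "j \<le> n - 1" "p (j + 1) \<in> X1" by blast
            from hitcases[OF j(2)] show ?thesis
            proof
              assume "p (j + 1) \<in> X \<and> \<not> occ (p (j + 1))"
              moreover have "j + 1 \<le> n" using j(1) n0 by simp
              ultimately show ?thesis by blast
            next
              assume "occ (p (j + 1)) \<and> fst (p (j + 1)) \<in> W"
              moreover have "j + 1 \<le> n" using j(1) n0 by simp
              ultimately show ?thesis using nocc[of "j + 1"] by simp
            qed
          qed simp
        qed
      qed
    next
      fix p assume f: "\<forall>n. fplay \<sigma> P0 p n"
      show "(\<exists>i. p i \<in> X) \<or> adam_wins_inf \<phi> p"
      proof (cases "\<exists>k. 0 < k \<and> occ (p k)")
        case True
        from least_pos[OF True] obtain k where k: "0 < k" "occ (p k)"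
          and no: "\<And>i. 0 < i \<Longrightarrow> i < k \<Longrightarrow> \<not> occ (p i)" by blast
        show ?thesis
        proof (cases "\<exists>i\<le>k. p i \<in> X")
          case True then show ?thesis by blast
        next
          case nh: False
          have a: "fst (p k) \<in> W \<and> fplay (\<sigma>W (fst (p k))) (fst (p k), FVar Z) (\<lambda>i. p (i + k)) n'" for n'
            using claimB[OF f[rule_format, of "n' + k"] k(1) _ k(2) no] nh by simp
          then have "(\<exists>i. p (i + k) \<in> X) \<or> adam_wins_inf \<phi> (\<lambda>i. p (i + k))"
            using wW[of "fst (p k)"] unfolding wins_def by blast
          then show ?thesis using adam_wins_inf_shift by blast
        qed
      next
        case False
        have s1: "fplay \<sigma>1 (H', \<psi>) (\<lambda>i. p (i + 1)) n'" for n'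
        proof -
          have "\<And>i. 0 < i \<Longrightarrow> \<not> occ (p i)" using False by blast
          then show ?thesis using seg1[OF f[rule_format, of "n' + 1"], of "n' + 1"] by simp
        qed
        then have "(\<exists>j. p (j + 1) \<in> X1) \<or> adam_wins_inf \<phi> (\<lambda>i. p (i + 1))"
          using w1 unfolding wins_def by blast
        then show ?thesis
        proof
          assume "\<exists>j. p (j + 1) \<in> X1"
          then obtain j where j: "p (j + 1) \<in> X1" by blast
          from hitcases[OF j] show ?thesis
          proof
            assume "occ (p (j + 1)) \<and> fst (p (j + 1)) \<in> W"
            then show ?thesis using False by auto
          qed blast
        next
          assume "adam_wins_inf \<phi> (\<lambda>i. p (i + 1))"
          then show ?thesis using adam_wins_inf_shift by blast
        qed
      qed
    qed
    have "wins X (Nu Z \<psi>) (H', FVar Z) \<sigma>" using wmain unfolding P0_def .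
    then show "H' \<in> W" unfolding W_def using H' by blast
  qed
  have "W \<subseteq> procs TS" unfolding W_def by blast
  with gW have "W \<in> {Q. Q \<subseteq> procs TS \<and> procs TS - sem TS (V'(Z := procs TS - Q)) \<psi> \<subseteq> Q}" by simp
  then have "\<Inter>{Q. Q \<subseteq> procs TS \<and> procs TS - sem TS (V'(Z := procs TS - Q)) \<psi> \<subseteq> Q} \<subseteq> W" by (rule Inter_lower)
  moreover have "H \<in> \<Inter>{Q. Q \<subseteq> procs TS \<and> procs TS - sem TS (V'(Z := procs TS - Q)) \<psi> \<subseteq> Q}"
    using H by simp
  ultimately have "H \<in> W" by blast
  then show ?thesis unfolding W_def X_def by blast
qed


lemma hit0: "P \<in> X \<Longrightarrow> wins X \<psi> P \<sigma>"
  unfolding wins_def fplay_def by blast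

lemma term0:
  assumes "moves TS \<phi> P = {}" "adam_wins_end V P" "Inside \<psi> P"
  shows "wins X \<psi> P \<sigma>"
proof -
  have n0: "n = 0" if "fplay \<sigma> P p n" for p n
  proof (rule ccontr)
    assume "n \<noteq> 0"
    then have "p (Suc 0) \<in> moves TS \<phi> (p 0)" using fplay_move[OF that, of 0] by simp
    then show False using assms(1) that unfolding fplay_def by simp
  qed
  show ?thesis unfolding wins_def
  proof (intro conjI allI impI)
    fix p n assume f: "fplay \<sigma> P p n"
    then show "(\<exists>i\<le>n. p i \<in> X) \<or> (\<forall>i\<le>n. Inside \<psi> (p i))"
      using n0[OF f] assms(3) unfolding fplay_def by simp
  next
    fix p n assume "fplay \<sigma> P p n \<and> moves TS \<phi> (p n) = {}"
    then show "(\<exists>i\<le>n. p i \<in> X) \<or> adam_wins_end V (p n)"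
      using n0[of p n] assms(2) unfolding fplay_def by simp
  next
    fix p assume "\<forall>n. fplay \<sigma> P p n"
    then have "fplay \<sigma> P p 1" by blast
    then show "(\<exists>i. p i \<in> X) \<or> adam_wins_inf \<phi> p" using n0 by fastforce
  qed
qed

lemma exitset_mono: "fvars \<psi> \<subseteq> fvars \<psi>' \<Longrightarrow> exitset V' \<psi> \<subseteq> exitset V' \<psi>'"
  unfolding exitset_def by blast

lemma wins_sub: "wins (exitset V' \<psi>) \<psi> P \<sigma> \<Longrightarrow> \<psi> \<in> sub \<psi>' \<Longrightarrow> fvars \<psi> \<subseteq> fvars \<psi>' \<Longrightarrow>
   wins (exitset V' \<psi>') \<psi>' P \<sigma>"
  using wins_mono[of "exitset V' \<psi>" \<psi> P \<sigma> "exitset V' \<psi>'" \<psi>'] exitset_mono[of \<psi> \<psi>' V'] Inside_mono[of \<psi> \<psi>'] by blast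

lemma step_eve:
  assumes ins: "Inside \<psi> P" and na: "\<not> adam_pos P" and trm: "moves TS \<phi> P = {} \<Longrightarrow> adam_wins_end V P"
    and ex: "\<And>Q. Q \<in> moves TS \<phi> P \<Longrightarrow> \<exists>\<sigma>. wins X \<psi> Q \<sigma>"
  shows "\<exists>\<sigma>. wins X \<psi> P \<sigma>"
proof -
  have "wins X \<psi> P (\<lambda>h. if length h \<le> 1 then undefined else (\<lambda>Q. SOME \<sigma>. wins X \<psi> Q \<sigma>) (h ! 1) (tl h))"
  proof (rule step[where A="moves TS \<phi> P"])
    show "Inside \<psi> P" by (rule ins)
  next
    fix Q assume "Q \<in> moves TS \<phi> P"
    then show "wins X \<psi> Q (SOME \<sigma>. wins X \<psi> Q \<sigma>)" using someI_ex[OF ex] by blast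
  next
    assume "adam_pos P" then show "undefined \<in> moves TS \<phi> P \<and> undefined \<in> moves TS \<phi> P" using na by simp
  next
    show "moves TS \<phi> P \<subseteq> moves TS \<phi> P" by simp
  next
    assume "moves TS \<phi> P = {}" then show "adam_wins_end V P" by (rule trm)
  qed
  then show ?thesis by blast
qed

lemma step_adam:
  assumes ins: "Inside \<psi> P" and ad: "adam_pos P" and q: "Q0 \<in> moves TS \<phi> P" and w: "wins X \<psi> Q0 \<sigma>0"
  shows "\<exists>\<sigma>. wins X \<psi> P \<sigma>"
proof -
  have "wins X \<psi> P (\<lambda>h. if length h \<le> 1 then Q0 else (\<lambda>_. \<sigma>0) (h ! 1) (tl h))"
  proof (rule step[where A="{Q0}"])
    show "Inside \<psi> P" by (rule ins)
  next
    fix Q assume "Q \<in> moves TS \<phi> P" "Q \<in> {Q0}"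
    then show "wins X \<psi> Q \<sigma>0" using w by simp
  next
    show "Q0 \<in> moves TS \<phi> P \<and> Q0 \<in> {Q0}" using q by simp
  next
    assume "\<not> adam_pos P" then show "moves TS \<phi> P \<subseteq> {Q0}" using ad by simp
  next
    assume "moves TS \<phi> P = {}" then show "adam_wins_end V P" using q by simp
  qed
  then show ?thesis by blast
qed

lemma succ_procs:
  assumes "(R, t) \<in> procs TS" "r \<in> R"
  shows "(outs TS (tgt r), Some r) \<in> procs TS"
proof -
  have "R \<in> XX TS" using assms(1) unfolding procs_def by auto
  then have "R \<subseteq> Tr TS" unfolding XX_def sqsub_def outs_def by auto
  then have "r \<in> Tr TS" using assms(2) by auto
  then have "tgt r \<in> St TS" using tsi unfolding is_tsi_def tgt_def by auto
  then show ?thesis unfolding procs_def XX_def AA_def using \<open>r \<in> Tr TS\<close> by auto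
qed

lemma ot_procs: "(R, t) \<in> procs TS \<Longrightarrow> M \<in> XX TS \<Longrightarrow> (M, t) \<in> procs TS"
  unfolding procs_def by auto

lemma main:
  "\<psi> \<in> sub \<phi> \<Longrightarrow> (\<forall>Y. V' Y \<subseteq> procs TS) \<Longrightarrow> (\<forall>Y. Y \<notin> set (bvars \<phi>) \<longrightarrow> V' Y = V Y) \<Longrightarrow>
   H \<in> procs TS \<Longrightarrow> H \<notin> sem TS V' \<psi> \<Longrightarrow> \<exists>\<sigma>. wins (exitset V' \<psi>) \<psi> (H, \<psi>) \<sigma>"
proof (induction \<psi> arbitrary: V' H)
  case (FVar Y)
  then have "(H, FVar Y) \<in> exitset V' (FVar Y)" unfolding exitset_def by (cases H) auto
  then show ?case using hit0 by blast
next
  case (FNeg c)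
  obtain Y where c: "c = FVar Y" using pnf FNeg.prems(1) unfolding pnf_def by blast
  have "Y \<notin> set (bvars \<phi>)"
  proof
    assume Yb: "Y \<in> set (bvars \<phi>)"
    have "Y \<in> fvars \<phi> \<or> (\<exists>\<beta>. (Mu Y \<beta> \<in> sub \<phi> \<or> Nu Y \<beta> \<in> sub \<phi>) \<and> FNeg (FVar Y) \<in> sub \<beta>)"
      using fvar_origin[of "FNeg (FVar Y)" \<phi> Y] FNeg.prems(1) c by simp
    then show False using pnf Yb unfolding pnf_def by blast
  qed
  then have e: "V' Y = V Y" using FNeg.prems(3) by blast
  have "H \<in> V Y" using FNeg.prems(4,5) c e by simp
  then show ?case using term0[of "(H, FNeg c)"] c by (simp add: Inside_def)
next
  case (FConj a b)
  have sa: "a \<in> sub \<phi>" "b \<in> sub \<phi>" using FConj.prems(1) sub_trans[of a "FConj a b" \<phi>] sub_trans[of b "FConj a b" \<phi>] by auto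
  have ins: "Inside (FConj a b) (H, FConj a b)" by (simp add: Inside_def)
  have m: "moves TS \<phi> (H, FConj a b) = {(H, a), (H, b)}" by simp
  show ?case
  proof (cases "H \<notin> sem TS V' a")
    case True
    obtain \<sigma>a where w: "wins (exitset V' a) a (H, a) \<sigma>a" using FConj.IH(1)[OF sa(1) FConj.prems(2,3,4) True] by blast
    have w': "wins (exitset V' (FConj a b)) (FConj a b) (H, a) \<sigma>a"
      by (rule wins_sub[OF w]) auto
    show ?thesis by (rule step_adam[OF ins _ _ w']) simp_all
  next
    case False
    then have F: "H \<notin> sem TS V' b" using FConj.prems(5) by auto
    obtain \<sigma>b where w: "wins (exitset V' b) b (H, b) \<sigma>b" using FConj.IH(2)[OF sa(2) FConj.prems(2,3,4) F] by blast
    have w': "wins (exitset V' (FConj a b)) (FConj a b) (H, b) \<sigma>b"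
      by (rule wins_sub[OF w]) auto
    show ?thesis by (rule step_adam[OF ins _ _ w']) simp_all
  qed
next
  case (FDisj a b)
  have sa: "a \<in> sub \<phi>" "b \<in> sub \<phi>" using FDisj.prems(1) sub_trans[of a "FDisj a b" \<phi>] sub_trans[of b "FDisj a b" \<phi>] by auto
  have ins: "Inside (FDisj a b) (H, FDisj a b)" by (simp add: Inside_def)
  have na: "H \<notin> sem TS V' a" "H \<notin> sem TS V' b" using FDisj.prems(4,5) by auto
  have ex: "\<exists>\<sigma>. wins (exitset V' (FDisj a b)) (FDisj a b) Q \<sigma>" if q: "Q \<in> moves TS \<phi> (H, FDisj a b)" for Q
  proof -
    have "Q = (H, a) \<or> Q = (H, b)" using that by simp
    then show ?thesis
    proof
      assume q: "Q = (H, a)"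
      obtain \<sigma>a where w: "wins (exitset V' a) a (H, a) \<sigma>a" using FDisj.IH(1)[OF sa(1) FDisj.prems(2,3,4) na(1)] by blast
      have "wins (exitset V' (FDisj a b)) (FDisj a b) (H, a) \<sigma>a"
        by (rule wins_sub[OF w]) auto
      then show ?thesis using q by blast
    next
      assume q: "Q = (H, b)"
      obtain \<sigma>b where w: "wins (exitset V' b) b (H, b) \<sigma>b" using FDisj.IH(2)[OF sa(2) FDisj.prems(2,3,4) na(2)] by blast
      have "wins (exitset V' (FDisj a b)) (FDisj a b) (H, b) \<sigma>b"
        by (rule wins_sub[OF w]) auto
      then show ?thesis using q by blast
    qed
  qed
  show ?case by (rule step_eve[OF ins _ _ ex]) simp_all
next
  case (DiaC l c)
  obtain R t where Ht: "H = (R, t)" by (cases H)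
  have sc: "c \<in> sub \<phi>" using DiaC.prems(1) sub_trans[of c "DiaC l c" \<phi>] by auto
  have ins: "Inside (DiaC l c) (H, DiaC l c)" by (simp add: Inside_def)
  have ex: "\<exists>\<sigma>. wins (exitset V' (DiaC l c)) (DiaC l c) Q \<sigma>" if q: "Q \<in> moves TS \<phi> (H, DiaC l c)" for Q
  proof -
    obtain r where r: "Q = ((outs TS (tgt r), Some r), c)" "r \<in> R" "lbl r = l" "cle TS t r"
      using q Ht by auto
    have pr: "(outs TS (tgt r), Some r) \<in> procs TS" using succ_procs DiaC.prems(4) Ht r(2) by blast
    have "(outs TS (tgt r), Some r) \<notin> sem TS V' c" using DiaC.prems(4,5) Ht r by auto
    then obtain \<sigma>c where w: "wins (exitset V' c) c ((outs TS (tgt r), Some r), c) \<sigma>c"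
      using DiaC.IH[OF sc DiaC.prems(2,3) pr] by blast
    have "wins (exitset V' (DiaC l c)) (DiaC l c) ((outs TS (tgt r), Some r), c) \<sigma>c"
      by (rule wins_sub[OF w]) auto
    then show ?thesis using r(1) by blast
  qed
  show ?case by (rule step_eve[OF ins _ _ ex]) (simp_all add: Ht)
next
  case (BoxC l c)
  obtain R t where Ht: "H = (R, t)" by (cases H)
  have sc: "c \<in> sub \<phi>" using BoxC.prems(1) sub_trans[of c "BoxC l c" \<phi>] by auto
  have ins: "Inside (BoxC l c) (H, BoxC l c)" by (simp add: Inside_def)
  obtain r where r: "r \<in> R" "lbl r = l" "cle TS t r" "(outs TS (tgt r), Some r) \<in> procs TS - sem TS V' c"
    using BoxC.prems(4,5) Ht by auto
  then obtain \<sigma>c where w: "wins (exitset V' c) c ((outs TS (tgt r), Some r), c) \<sigma>c"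
    using BoxC.IH[OF sc BoxC.prems(2,3)] by blast
  have w': "wins (exitset V' (BoxC l c)) (BoxC l c) ((outs TS (tgt r), Some r), c) \<sigma>c"
    by (rule wins_sub[OF w]) auto
  have mv: "((outs TS (tgt r), Some r), c) \<in> moves TS \<phi> (H, BoxC l c)" using r unfolding Ht moves.simps mem_Collect_eq by blast
  show ?case by (rule step_adam[OF ins _ mv w']) simp
next
  case (DiaNC l c)
  obtain R t where Ht: "H = (R, t)" by (cases H)
  have sc: "c \<in> sub \<phi>" using DiaNC.prems(1) sub_trans[of c "DiaNC l c" \<phi>] by auto
  have ins: "Inside (DiaNC l c) (H, DiaNC l c)" by (simp add: Inside_def)
  have ex: "\<exists>\<sigma>. wins (exitset V' (DiaNC l c)) (DiaNC l c) Q \<sigma>" if q: "Q \<in> moves TS \<phi> (H, DiaNC l c)" for Q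
  proof -
    obtain r where r: "Q = ((outs TS (tgt r), Some r), c)" "r \<in> R" "lbl r = l" "ominus TS t r"
      using q Ht by auto
    have pr: "(outs TS (tgt r), Some r) \<in> procs TS" using succ_procs DiaNC.prems(4) Ht r(2) by blast
    have "(outs TS (tgt r), Some r) \<notin> sem TS V' c" using DiaNC.prems(4,5) Ht r by auto
    then obtain \<sigma>c where w: "wins (exitset V' c) c ((outs TS (tgt r), Some r), c) \<sigma>c"
      using DiaNC.IH[OF sc DiaNC.prems(2,3) pr] by blast
    have "wins (exitset V' (DiaNC l c)) (DiaNC l c) ((outs TS (tgt r), Some r), c) \<sigma>c"
      by (rule wins_sub[OF w]) auto
    then show ?thesis using r(1) by blast
  qed
  show ?case by (rule step_eve[OF ins _ _ ex]) (simp_all add: Ht)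
next
  case (BoxNC l c)
  obtain R t where Ht: "H = (R, t)" by (cases H)
  have sc: "c \<in> sub \<phi>" using BoxNC.prems(1) sub_trans[of c "BoxNC l c" \<phi>] by auto
  have ins: "Inside (BoxNC l c) (H, BoxNC l c)" by (simp add: Inside_def)
  obtain r where r: "r \<in> R" "lbl r = l" "ominus TS t r" "(outs TS (tgt r), Some r) \<in> procs TS - sem TS V' c"
    using BoxNC.prems(4,5) Ht by auto
  then obtain \<sigma>c where w: "wins (exitset V' c) c ((outs TS (tgt r), Some r), c) \<sigma>c"
    using BoxNC.IH[OF sc BoxNC.prems(2,3)] by blast
  have w': "wins (exitset V' (BoxNC l c)) (BoxNC l c) ((outs TS (tgt r), Some r), c) \<sigma>c"
    by (rule wins_sub[OF w]) auto
  have mv: "((outs TS (tgt r), Some r), c) \<in> moves TS \<phi> (H, BoxNC l c)" using r unfolding Ht moves.simps mem_Collect_eq by blast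
  show ?case by (rule step_adam[OF ins _ mv w']) simp
next
  case (DiaOt c)
  obtain R t where Ht: "H = (R, t)" by (cases H)
  have sc: "c \<in> sub \<phi>" using DiaOt.prems(1) sub_trans[of c "DiaOt c" \<phi>] by auto
  have ins: "Inside (DiaOt c) (H, DiaOt c)" by (simp add: Inside_def)
  have ex: "\<exists>\<sigma>. wins (exitset V' (DiaOt c)) (DiaOt c) Q \<sigma>" if q: "Q \<in> moves TS \<phi> (H, DiaOt c)" for Q
  proof -
    obtain M where r: "Q = ((M, t), c)" "M \<in> XX TS" "sqsub TS M R"
      using q Ht by auto
    have pr: "(M, t) \<in> procs TS" using ot_procs DiaOt.prems(4) Ht r(2) by blast
    have "(M, t) \<notin> sem TS V' c" using DiaOt.prems(4,5) Ht r by auto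
    then obtain \<sigma>c where w: "wins (exitset V' c) c ((M, t), c) \<sigma>c"
      using DiaOt.IH[OF sc DiaOt.prems(2,3) pr] by blast
    have "wins (exitset V' (DiaOt c)) (DiaOt c) ((M, t), c) \<sigma>c"
      by (rule wins_sub[OF w]) auto
    then show ?thesis using r(1) by blast
  qed
  show ?case by (rule step_eve[OF ins _ _ ex]) (simp_all add: Ht)
next
  case (BoxOt c)
  obtain R t where Ht: "H = (R, t)" by (cases H)
  have sc: "c \<in> sub \<phi>" using BoxOt.prems(1) sub_trans[of c "BoxOt c" \<phi>] by auto
  have ins: "Inside (BoxOt c) (H, BoxOt c)" by (simp add: Inside_def)
  obtain M where r: "M \<in> XX TS" "sqsub TS M R" "(M, t) \<in> procs TS - sem TS V' c"
    using BoxOt.prems(4,5) Ht by auto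
  then obtain \<sigma>c where w: "wins (exitset V' c) c ((M, t), c) \<sigma>c"
    using BoxOt.IH[OF sc BoxOt.prems(2,3)] by blast
  have w': "wins (exitset V' (BoxOt c)) (BoxOt c) ((M, t), c) \<sigma>c"
    by (rule wins_sub[OF w]) auto
  have mv: "((M, t), c) \<in> moves TS \<phi> (H, BoxOt c)" using r unfolding Ht moves.simps mem_Collect_eq by blast
  show ?case by (rule step_adam[OF ins _ mv w']) simp
next
  case (Mu Z c)
  have sc: "c \<in> sub \<phi>" using Mu.prems(1) sub_trans[of c "Mu Z c" \<phi>] by auto
  have Zb: "Z \<in> set (bvars \<phi>)" using binder_bvars[of Z c \<phi>] Mu.prems(1) by blast
  define L where "L = sem TS V' (Mu Z c)"
  have Lp: "L \<subseteq> procs TS" unfolding L_def using sem_procs Mu.prems(2) by blast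
  have fx: "sem TS (V'(Z := L)) c \<subseteq> L"
  proof -
    have "sem TS (V'(Z := L)) c \<subseteq> Q" if Q: "Q \<subseteq> procs TS" "sem TS (V'(Z := Q)) c \<subseteq> Q" for Q
    proof -
      have "L \<subseteq> Q" unfolding L_def using Q by auto
      have "sem TS (V'(Z := L)) c \<subseteq> sem TS (V'(Z := Q)) c"
      proof (rule sem_mono)
        show "\<forall>Y. (V'(Z := L)) Y \<subseteq> (V'(Z := Q)) Y" using \<open>L \<subseteq> Q\<close> by simp
        show "\<forall>\<chi>. FNeg \<chi> \<in> sub c \<longrightarrow> (\<exists>Y. \<chi> = FVar Y \<and> (V'(Z := L)) Y = (V'(Z := Q)) Y)"
        proof (intro allI impI)
          fix \<chi> assume "FNeg \<chi> \<in> sub c"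
          then have n: "FNeg \<chi> \<in> sub \<phi>" using sc sub_trans by blast
          then obtain Y where "\<chi> = FVar Y" using pnf unfolding pnf_def by blast
          moreover have "Y \<noteq> Z" using pnf Mu.prems(1) \<open>FNeg \<chi> \<in> sub c\<close> calculation unfolding pnf_def by blast
          ultimately show "\<exists>Y. \<chi> = FVar Y \<and> (V'(Z := L)) Y = (V'(Z := Q)) Y" by simp
        qed
      qed
      then show ?thesis using Q by blast
    qed
    then show ?thesis unfolding L_def by (simp only: sem.simps) blast
  qed
  have IHc: "\<exists>\<sigma>. wins (exitset (V'(Z:=L)) c) c (H', c) \<sigma>" if "H' \<in> procs TS - L" for H'
  proof (rule Mu.IH[OF sc])
    show "\<forall>Y. (V'(Z := L)) Y \<subseteq> procs TS" using Mu.prems(2) Lp by simp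
    show "\<forall>Y. Y \<notin> set (bvars \<phi>) \<longrightarrow> (V'(Z := L)) Y = V Y" using Mu.prems(3) Zb by auto
    show "H' \<in> procs TS" "H' \<notin> sem TS (V'(Z := L)) c" using that fx by auto
  qed
  have HL: "H \<in> procs TS - L" using Mu.prems(4,5) unfolding L_def by simp
  obtain \<sigma>m where wm: "wins (exitset V' (Mu Z c)) (Mu Z c) (H, FVar Z) \<sigma>m"
    using mu_case[OF Mu.prems(1) IHc HL] by blast
  have ins: "Inside (Mu Z c) (H, Mu Z c)" by (simp add: Inside_def)
  show ?case by (rule step_eve[OF ins]) (use wm in auto)
next
  case (Nu Z c)
  have sc: "c \<in> sub \<phi>" using Nu.prems(1) sub_trans[of c "Nu Z c" \<phi>] by auto
  have Zb: "Z \<in> set (bvars \<phi>)" using binder_bvars[of Z c \<phi>] Nu.prems(1) by blast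
  have IHc: "\<exists>\<sigma>. wins (exitset (V'(Z:=Q)) c) c (H', c) \<sigma>"
    if "Q \<subseteq> procs TS" "H' \<in> procs TS" "H' \<notin> sem TS (V'(Z:=Q)) c" for Q H'
  proof (rule Nu.IH[OF sc])
    show "\<forall>Y. (V'(Z := Q)) Y \<subseteq> procs TS" using Nu.prems(2) that by simp
    show "\<forall>Y. Y \<notin> set (bvars \<phi>) \<longrightarrow> (V'(Z := Q)) Y = V Y" using Nu.prems(3) Zb by auto
    show "H' \<in> procs TS" by (rule that(2))
    show "H' \<notin> sem TS (V'(Z := Q)) c" by (rule that(3))
  qed
  obtain \<sigma>m where wm: "wins (exitset V' (Nu Z c)) (Nu Z c) (H, FVar Z) \<sigma>m"
    using nu_case[OF Nu.prems(1) IHc Nu.prems(4,5)] by blast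
  have ins: "Inside (Nu Z c) (H, Nu Z c)" by (simp add: Inside_def)
  show ?case by (rule step_eve[OF ins]) (use wm in auto)
qed


lemma exterm:
  assumes "Q \<in> exitset V \<phi>"
  shows "moves TS \<phi> Q = {} \<and> adam_wins_end V Q"
proof -
  obtain H' Y where Q: "Q = (H', FVar Y)" "Y \<in> fvars \<phi>" "H' \<notin> V Y"
    using assms unfolding exitset_def by auto
  have "Y \<notin> set (bvars \<phi>)" using pnf Q(2) unfolding pnf_def by blast
  then have "\<not> (Mu Y \<beta> \<in> sub \<phi> \<or> Nu Y \<beta> \<in> sub \<phi>)" for \<beta> using binder_bvars[of Y \<beta> \<phi>] by blast
  then show ?thesis using Q by simp
qed

lemma take_as_map: "k \<le> length xs \<Longrightarrow> take k xs = map (\<lambda>i. xs ! i) [0..<k]"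
  by (rule nth_equalityI) auto

lemma final:
  assumes nin: "init_proc TS \<notin> sem TS V \<phi>"
  shows "adam_has_winning_strategy TS V (init_proc TS) \<phi>"
proof -
  have ip: "init_proc TS \<in> procs TS"
    using tsi unfolding init_proc_def procs_def XX_def AA_def is_tsi_def by auto
  obtain \<sigma> where w: "wins (exitset V \<phi>) \<phi> (init_proc TS, \<phi>) \<sigma>"
    using main[OF sub_refl Vp _ ip nin] by blast
  define \<sigma>' where "\<sigma>' = (\<lambda>h. if \<sigma> h \<in> moves TS \<phi> (last h) then \<sigma> h else (SOME m. m \<in> moves TS \<phi> (last h)))"
  have st: "adam_strategy TS \<phi> \<sigma>'"
    unfolding adam_strategy_def
  proof (intro allI impI)
    fix h assume h: "h \<noteq> [] \<and> adam_pos (last h) \<and> moves TS \<phi> (last h) \<noteq> {}"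
    then have "\<exists>m. m \<in> moves TS \<phi> (last h)" by blast
    then have s: "(SOME m. m \<in> moves TS \<phi> (last h)) \<in> moves TS \<phi> (last h)" by (rule someI_ex)
    show "\<sigma>' h \<in> moves TS \<phi> (last h)" unfolding \<sigma>'_def using s by simp
  qed
  have fin: "adam_wins_end V (last ps)" if fp: "finite_play TS (init_proc TS) \<phi> \<sigma>' ps" for ps
  proof -
    define p where "p = (\<lambda>i. ps ! i)"
    define n where "n = length ps - 1"
    have ne: "ps \<noteq> []" using fp unfolding finite_play_def by blast
    have f: "fplay \<sigma> (init_proc TS, \<phi>) p n"
      unfolding fplay_def
    proof (intro conjI allI impI)
      show "p 0 = (init_proc TS, \<phi>)" using fp ne unfolding finite_play_def p_def by (simp add: hd_conv_nth)
    next
      fix i assume i: "i < n"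
      then have si: "Suc i < length ps" unfolding n_def by simp
      show "p (Suc i) \<in> moves TS \<phi> (p i)" using fp si unfolding finite_play_def p_def by blast
    next
      fix i assume i0: "i < n" and i: "adam_pos (p i) \<and> \<sigma> (map p [0..<Suc i]) \<in> moves TS \<phi> (p i)"
      from i0 have si: "Suc i < length ps" unfolding n_def by simp
      have tk: "take (Suc i) ps = map p [0..<Suc i]" unfolding p_def using si by (simp add: take_as_map del: upt_Suc)
      have lt: "last (map p [0..<Suc i]) = p i" by simp
      have "ps ! Suc i = \<sigma>' (take (Suc i) ps)" using fp si i unfolding finite_play_def p_def by auto
      then show "p (Suc i) = \<sigma> (map p [0..<Suc i])" using i unfolding tk \<sigma>'_def lt p_def by simp
    qed
    have lst: "last ps = p n" unfolding p_def n_def using ne by (simp add: last_conv_nth)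
    have em: "moves TS \<phi> (p n) = {}" using fp lst unfolding finite_play_def by simp
    have "(\<exists>i\<le>n. p i \<in> exitset V \<phi>) \<or> adam_wins_end V (p n)"
      using w f em unfolding wins_def by blast
    then show ?thesis
    proof
      assume "\<exists>i\<le>n. p i \<in> exitset V \<phi>"
      then obtain i where i: "i \<le> n" "p i \<in> exitset V \<phi>" by blast
      have "i = n"
      proof (rule ccontr)
        assume "i \<noteq> n"
        then have "p (Suc i) \<in> moves TS \<phi> (p i)" using fplay_move[OF f] i(1) by simp
        then show False using exterm[OF i(2)] by simp
      qed
      then show ?thesis using exterm[OF i(2)] lst by simp
    qed (simp add: lst)
  qed
  have inf: "adam_wins_inf \<phi> p" if ip: "infinite_play TS (init_proc TS) \<phi> \<sigma>' p" for p
  proof -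
    have f: "fplay \<sigma> (init_proc TS, \<phi>) p n" for n
      unfolding fplay_def
    proof (intro conjI allI impI)
      show "p 0 = (init_proc TS, \<phi>)" using ip unfolding infinite_play_def by blast
    next
      fix i show "p (Suc i) \<in> moves TS \<phi> (p i)" using ip unfolding infinite_play_def by blast
    next
      fix i assume i0: "i < n" and i: "adam_pos (p i) \<and> \<sigma> (map p [0..<Suc i]) \<in> moves TS \<phi> (p i)"
      have lt: "last (map p [0..<Suc i]) = p i" by simp
      have "p (Suc i) = \<sigma>' (map p [0..<Suc i])" using ip i unfolding infinite_play_def by blast
      then show "p (Suc i) = \<sigma> (map p [0..<Suc i])" using i unfolding \<sigma>'_def lt by simp
    qed
    have "(\<exists>i. p i \<in> exitset V \<phi>) \<or> adam_wins_inf \<phi> p"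
      using w f unfolding wins_def by blast
    then show ?thesis
    proof
      assume "\<exists>i. p i \<in> exitset V \<phi>"
      then obtain i where i: "p i \<in> exitset V \<phi>" by blast
      have "p (Suc i) \<in> moves TS \<phi> (p i)" using fplay_move[OF f[of "Suc i"]] by simp
      then show ?thesis using exterm[OF i] by simp
    qed
  qed
  show ?thesis unfolding adam_has_winning_strategy_def using st fin inf by blast
qed

end

theorem theorem6:
  fixes TS :: "('s,'a) tsi"
    and V :: "'v \<Rightarrow> ('s,'a) proc set"
    and \<phi> :: "('a,'v) tfl"
  assumes "is_tsi TS"
    and "image_finite TS"
    and "\<forall>Z. V Z \<subseteq> procs TS"
    and "pnf \<phi>"
    and "init_proc TS \<notin> sem TS V \<phi>"
  shows "adam_has_winning_strategy TS V (init_proc TS) \<phi>"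
proof -
  interpret game TS V \<phi> by unfold_locales (use assms in auto)
  show ?thesis by (rule final) (rule assms(5))
qed

end
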